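(* Let $L:[0,T]\times\mathbb{R}^N\times\mathbb{R}^N\to\mathbb{R}\cup\{\pm\infty\}$ satisfy (L1)–(L5), let $g:\mathbb{R}^N\to\mathbb{R}\cup\{\pm\infty\}$ be proper and lower semicontinuous, and let $V$ be the value function associated with $L$ and $g$. Then for every $(t_0,x_0)\in\mathrm{dom}\,V\cap(0,T]\times\mathbb{R}^N$ and every $v_0\in\mathrm{dom}\,L(t_0,x_0,\cdot)$, one has $dV(t_0,x_0)(-1,-v_0)\leq L(t_0,x_0,v_0)$.
   Context: $\mathbb{B}_R$ is the closed ball of radius $R$ at $0$; $\mathrm{dom}\,\varphi=\{z:\varphi(z)\neq\pm\infty\}$; $\varphi$ is proper if it never equals $-\infty$ and is not identically $+\infty$. Value function: for $t_0\in[0,T)$, $V(t_0,x_0)=\inf\{g(x(T))+\int_{t_0}^TL(t,x(t),\dot x(t))\,dt\}$ over absolutely continuous $x:[t_0,T]\to\mathbb{R}^N$ with $x(t_0)=x_0$; $V(T,x_0)=g(x_0)$. $V$ is regarded as $+\infty$ outside $[0,T]\times\mathbb{R}^N$. Subderivative at $z$ with $\varphi(z)$ finite: $d\varphi(z)(v)=\liminf_{\tau\to0^+,\,y\to v}(\varphi(z+\tau y)-\varphi(z))/\tau$. (L1) $L$ is lower semicontinuous in all variables. (L2) $L(t,x,\cdot)$ is convex and proper for every $t,x$. (L3) for every $(t,x,v)$ and every $(t_n,x_n)\to(t,x)$ there exist $v_n\to v$ with $L(t_n,x_n,v_n)\to L(t,x,v)$. (L4) for every $R\geq0$ there is $C_R\geq0$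 with $L(t,x,v)=+\infty$ whenever $t\in[0,T]$, $x\in\mathbb{B}_R$, $|v|>C_R$. (L5) there are an integrable $c:[0,T]\to[0,\infty)$ and a null set $\mathcal{N}$ with $L(t,x,v)=+\infty$ whenever $t\notin\mathcal{N}$ and $|v|>c(t)(1+|x|)$. *)

theory Defs
  imports "HOL-Analysis.Analysis"
begin

definition proper_fn :: "('b \<Rightarrow> ereal) \<Rightarrow> bool" where
  "proper_fn \<phi> \<longleftrightarrow> (\<forall>z. \<phi> z \<noteq> -\<infinity>) \<and> (\<exists>z. \<phi> z \<noteq> \<infinity>)"

definition lsc_on :: "'b::metric_space set \<Rightarrow> ('b \<Rightarrow> ereal) \<Rightarrow> bool" where
  "lsc_on S f \<longleftrightarrow> (\<forall>z\<in>S. \<forall>X. (\<forall>n. X n \<in> S) \<longrightarrow> X \<longlonglongrightarrow> z \<longrightarrow> f z \<le> liminf (\<lambda>n. f (X n)))"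

text \<open>Convexity of an extended-real valued function (with \<open>0 * \<infinity> = 0\<close>).\<close>
definition ereal_convex :: "('b::real_vector \<Rightarrow> ereal) \<Rightarrow> bool" where
  "ereal_convex f \<longleftrightarrow> (\<forall>u v (s::real). 0 \<le> s \<longrightarrow> s \<le> 1 \<longrightarrow>
     f (s *\<^sub>R u + (1 - s) *\<^sub>R v) \<le> ereal s * f u + ereal (1 - s) * f v)"

definition abs_cont_on :: "real \<Rightarrow> real \<Rightarrow> (real \<Rightarrow> 'b::real_normed_vector) \<Rightarrow> bool" where
  "abs_cont_on a b x \<longleftrightarrow>
     (\<forall>\<epsilon>>0. \<exists>\<delta>>0. \<forall>(n::nat) (l::nat \<Rightarrow> real) (r::nat \<Rightarrow> real).
        (\<forall>k<n. a \<le> l k \<and> l k \<le> r k \<and> r k \<le> b) \<longrightarrow>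
        (\<forall>i<n. \<forall>j<n. i \<noteq> j \<longrightarrow> {l i<..<r i} \<inter> {l j<..<r j} = {}) \<longrightarrow>
        (\<Sum>k<n. r k - l k) < \<delta> \<longrightarrow>
        (\<Sum>k<n. norm (x (r k) - x (l k))) < \<epsilon>)"

definition ext_integral :: "real set \<Rightarrow> (real \<Rightarrow> ereal) \<Rightarrow> ereal" where
  "ext_integral S h =
     (if (\<integral>\<^sup>+ t\<in>S. e2ennreal (- h t) \<partial>lebesgue) = \<infinity> then \<infinity>
      else enn2ereal (\<integral>\<^sup>+ t\<in>S. e2ennreal (h t) \<partial>lebesgue)
         - enn2ereal (\<integral>\<^sup>+ t\<in>S. e2ennreal (- h t) \<partial>lebesgue))"

definition value_fn :: "real \<Rightarrow> (real \<Rightarrow> 'a::euclidean_space \<Rightarrow> 'a \<Rightarrow> ereal) \<Rightarrow> ('a \<Rightarrow> ereal)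
    \<Rightarrow> real \<times> 'a \<Rightarrow> ereal" where
  "value_fn T L g = (\<lambda>(t0, x0).
     if t0 = T then g x0
     else if 0 \<le> t0 \<and> t0 < T then
       (INF x \<in> {x. abs_cont_on t0 T x \<and> x t0 = x0}.
          g (x T) + ext_integral {t0..T}
            (\<lambda>t. L t (x t) (vector_derivative x (at t within {t0..T}))))
     else \<infinity>)"

definition subderiv :: "('b::real_normed_vector \<Rightarrow> ereal) \<Rightarrow> 'b \<Rightarrow> 'b \<Rightarrow> ereal" where
  "subderiv \<phi> z w = Liminf (at_right (0::real) \<times>\<^sub>F nhds w)
      (\<lambda>(\<tau>, y). (\<phi> (z + \<tau> *\<^sub>R y) - \<phi> z) / ereal \<tau>)"

end

theory Submission
  imports Defs "HOL-Library.Diagonal_Subsequence"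
begin

definition lhc_on :: "'p::metric_space set \<Rightarrow> ('p \<Rightarrow> 'v::metric_space set) \<Rightarrow> bool" where
 "lhc_on K \<Phi> \<longleftrightarrow> (\<forall>p\<in>K. \<forall>v\<in>\<Phi> p. \<forall>e>0. \<exists>d>0. \<forall>q\<in>K. dist q p < d \<longrightarrow> (\<exists>w\<in>\<Phi> q. dist w v < e))"

lemma michael_step:
  fixes \<Phi> :: "'p::metric_space \<Rightarrow> 'v::real_normed_vector set"
  assumes K: "compact K" and ne: "\<forall>p\<in>K. \<Phi> p \<noteq> {}" and cv: "\<forall>p\<in>K. convex (\<Phi> p)"
    and lhc: "lhc_on K \<Phi>" and \<eta>: "\<eta> > 0"
  shows "\<exists>f. continuous_on K f \<and> (\<forall>p\<in>K. \<exists>w\<in>\<Phi> p. dist (f p) w < \<eta>)"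
proof -
  have "\<forall>p\<in>K. \<exists>v d. v \<in> \<Phi> p \<and> d > 0 \<and> (\<forall>q\<in>K. dist q p < d \<longrightarrow> (\<exists>w\<in>\<Phi> q. dist w v < \<eta>/2))"
  proof
    fix p assume p: "p \<in> K"
    then obtain v where v: "v \<in> \<Phi> p" using ne by blast
    then obtain d where "d > 0" "\<forall>q\<in>K. dist q p < d \<longrightarrow> (\<exists>w\<in>\<Phi> q. dist w v < \<eta>/2)"
      using lhc p \<eta> unfolding lhc_on_def by (meson half_gt_zero)
    then show "\<exists>v d. v \<in> \<Phi> p \<and> d > 0 \<and> (\<forall>q\<in>K. dist q p < d \<longrightarrow> (\<exists>w\<in>\<Phi> q. dist w v < \<eta>/2))"
      using v by blast
  qed
  then obtain V D where VD: "\<And>p. p \<in> K \<Longrightarrow> V p \<in> \<Phi> p \<and> D p > 0 \<and> (\<forall>q\<in>K. dist q p < D p \<longrightarrow> (\<exists>w\<in>\<Phi> q. dist w (V p) < \<eta>/2))"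
    by metis
  have cov: "K \<subseteq> (\<Union>p\<in>K. ball p (D p))" using VD by force
  obtain F where F: "F \<subseteq> K" "finite F" "K \<subseteq> (\<Union>p\<in>F. ball p (D p))"
    by (rule compactE_image[OF K _ cov]) auto
  define ph where "ph p q = max 0 (D p - dist q p)" for p q
  define S where "S q = (\<Sum>p\<in>F. ph p q)" for q
  have ph0: "ph p q \<ge> 0" for p q by (simp add: ph_def)
  have Spos: "S q > 0" if qK: "q \<in> K" for q
  proof -
    obtain p where "p \<in> F" "dist q p < D p" using F(3) qK by (force simp: dist_commute)
    then have "ph p q > 0" by (simp add: ph_def)
    then show ?thesis unfolding S_def using F(2) \<open>p \<in> F\<close> ph0
      by (metis (no_types, lifting) sum_pos2)
  qed
  define f where "f q = (\<Sum>p\<in>F. (ph p q / S q) *\<^sub>R V p)" for q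
  have cont: "continuous_on K f"
    unfolding f_def S_def ph_def
    apply (intro continuous_intros)
    using Spos unfolding S_def ph_def by force
  have "\<exists>w\<in>\<Phi> q. dist (f q) w < \<eta>" if q: "q \<in> K" for q
  proof -
    have "\<forall>p\<in>F. \<exists>w. w \<in> \<Phi> q \<and> (dist q p < D p \<longrightarrow> dist w (V p) < \<eta>/2)"
      using VD F(1) ne q by blast
    then obtain W where W: "\<And>p. p \<in> F \<Longrightarrow> W p \<in> \<Phi> q \<and> (dist q p < D p \<longrightarrow> dist (W p) (V p) < \<eta>/2)"
      by metis
    define w where "w = (\<Sum>p\<in>F. (ph p q / S q) *\<^sub>R W p)"
    have sum1: "(\<Sum>p\<in>F. ph p q / S q) = 1"
      using Spos[OF q] by (simp add: S_def sum_divide_distrib[symmetric])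
    have wm: "w \<in> \<Phi> q" unfolding w_def
      by (rule convex_sum[OF F(2)]) (use cv q sum1 W ph0 Spos[OF q] in auto)
    have "dist (f q) w = norm (\<Sum>p\<in>F. (ph p q / S q) *\<^sub>R (V p - W p))"
      by (simp add: f_def w_def dist_norm sum_subtractf scaleR_diff_right)
    also have "\<dots> \<le> (\<Sum>p\<in>F. norm ((ph p q / S q) *\<^sub>R (V p - W p)))"
      by (rule norm_sum)
    also have "\<dots> \<le> (\<Sum>p\<in>F. (ph p q / S q) * (\<eta>/2))"
    proof (rule sum_mono)
      fix p assume p: "p \<in> F"
      show "norm ((ph p q / S q) *\<^sub>R (V p - W p)) \<le> (ph p q / S q) * (\<eta>/2)"
      proof (cases "ph p q = 0")
        case True then show ?thesis by simp
      next
        case False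
        then have "dist q p < D p" using ph0[of p q] by (auto simp: ph_def max_def split: if_splits)
        then have "norm (V p - W p) < \<eta>/2" using W[OF p] by (simp add: dist_norm norm_minus_commute)
        moreover have "0 \<le> ph p q / S q" using ph0[of p q] Spos[OF q] by simp
        ultimately show ?thesis
          by (metis less_eq_real_def mult_left_mono norm_scaleR abs_of_nonneg)
      qed
    qed
    also have "\<dots> = (\<Sum>p\<in>F. ph p q / S q) * (\<eta>/2)" by (rule sum_distrib_right[symmetric])
    also have "\<dots> = \<eta>/2" using sum1 by simp
    finally show ?thesis using wm \<eta> by (intro bexI[of _ w]) auto
  qed
  then show ?thesis using cont by blast
qed

lemma lhc_inter_ball:
  fixes \<Phi> :: "'p::metric_space \<Rightarrow> 'v::real_normed_vector set"
  assumes lhc: "lhc_on K \<Phi>" and cf: "continuous_on K f"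
  shows "lhc_on K (\<lambda>p. \<Phi> p \<inter> ball (f p) r)"
  unfolding lhc_on_def
proof (intro ballI allI impI)
  fix p v e assume p: "p \<in> K" and v: "v \<in> \<Phi> p \<inter> ball (f p) r" and e: "(e::real) > 0"
  define e' where "e' = min e ((r - dist (f p) v)/2)"
  have e': "e' > 0" using v e by (auto simp: e'_def)
  obtain d1 where d1: "d1 > 0" "\<forall>q\<in>K. dist q p < d1 \<longrightarrow> (\<exists>w\<in>\<Phi> q. dist w v < e')"
    using lhc p v e' unfolding lhc_on_def by blast
  obtain d2 where d2: "d2 > 0" "\<forall>q\<in>K. dist q p < d2 \<longrightarrow> dist (f q) (f p) < e'"
    using cf p e' unfolding continuous_on_iff by blast
  show "\<exists>d>0. \<forall>q\<in>K. dist q p < d \<longrightarrow> (\<exists>w\<in>\<Phi> q \<inter> ball (f q) r. dist w v < e)"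
  proof (intro exI[of _ "min d1 d2"] conjI ballI impI)
    show "min d1 d2 > 0" using d1 d2 by simp
    fix q assume q: "q \<in> K" "dist q p < min d1 d2"
    then obtain w where w: "w \<in> \<Phi> q" "dist w v < e'" using d1 by auto
    have "dist (f q) (f p) < e'" using d2 q by auto
    then have "dist (f q) w < r"
    proof -
      have "e' \<le> (r - dist (f p) v)/2" unfolding e'_def by (rule min.cobounded2)
      then have "2*e' \<le> r - dist (f p) v" by simp
      then show ?thesis using w \<open>dist (f q) (f p) < e'\<close> dist_triangle[of "f q" w "f p"] dist_triangle[of "f p" w v] dist_commute[of v w]
        by linarith
    qed
    then show "\<exists>w\<in>\<Phi> q \<inter> ball (f q) r. dist w v < e" using w e'_def by (intro bexI[of _ w]) auto
  qed
qed

lemma michael_selection: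
  fixes \<Phi> :: "'p::metric_space \<Rightarrow> 'v::banach set"
  assumes K: "compact K" and ne: "\<forall>p\<in>K. \<Phi> p \<noteq> {}" and cv: "\<forall>p\<in>K. convex (\<Phi> p)"
    and lhc: "lhc_on K \<Phi>"
  shows "\<exists>f. continuous_on K f \<and> (\<forall>p\<in>K. f p \<in> closure (\<Phi> p))"
proof -
  define I where "I n f \<longleftrightarrow> continuous_on K f \<and> (\<forall>p\<in>K. \<exists>w\<in>\<Phi> p. dist (f p) w < (1/2::real)^n)" for n f
  have step: "\<exists>g. I (Suc n) g \<and> (\<forall>p\<in>K. dist (f p) (g p) < 2*(1/2::real)^n)" if If: "I n f" for n f
  proof -
    let ?\<Psi> = "\<lambda>p. \<Phi> p \<inter> ball (f p) ((1/2)^n)"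
    have ne': "\<forall>p\<in>K. ?\<Psi> p \<noteq> {}" using If unfolding I_def by (fastforce simp: dist_commute)
    have cv': "\<forall>p\<in>K. convex (?\<Psi> p)" using cv by (simp add: convex_Int)
    have lhc': "lhc_on K ?\<Psi>" using lhc_inter_ball[OF lhc] If unfolding I_def by blast
    obtain g where g: "continuous_on K g" "\<forall>p\<in>K. \<exists>w\<in>?\<Psi> p. dist (g p) w < (1/2)^(Suc n)"
      using michael_step[OF K ne' cv' lhc', of "(1/2)^(Suc n)"] by auto
    have "I (Suc n) g" unfolding I_def using g by blast
    moreover have "\<forall>p\<in>K. dist (f p) (g p) < 2*(1/2::real)^n"
    proof
      fix p assume "p \<in> K"
      then obtain w where w: "w \<in> ?\<Psi> p" "dist (g p) w < (1/2)^(Suc n)" using g by blast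
      have "dist (f p) (g p) \<le> dist (f p) w + dist (g p) w" by (rule dist_triangle2)
      also have "\<dots> < (1/2)^n + (1/2)^(Suc n)" using w by (intro add_strict_mono) auto
      also have "\<dots> \<le> 2*(1/2::real)^n" by simp
      finally show "dist (f p) (g p) < 2*(1/2::real)^n" .
    qed
    ultimately show ?thesis by blast
  qed
  have "\<exists>f. I 0 f" using michael_step[OF K ne cv lhc, of 1] unfolding I_def by auto
  define F where "F = rec_nat (SOME f. I 0 f) (\<lambda>n f. SOME g. I (Suc n) g \<and> (\<forall>p\<in>K. dist (f p) (g p) < 2*(1/2::real)^n))"
  have F0: "F 0 = (SOME f. I 0 f)" by (simp add: F_def)
  have FS: "F (Suc n) = (SOME g. I (Suc n) g \<and> (\<forall>p\<in>K. dist (F n p) (g p) < 2*(1/2::real)^n))" for n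
    by (simp add: F_def)
  have FI: "I n (F n)" for n
  proof (induction n)
    case 0 then show ?case unfolding F0 using someI_ex[OF \<open>\<exists>f. I 0 f\<close>] by simp
  next
    case (Suc n) then show ?case unfolding FS[of n] using someI_ex[OF step[OF Suc]] by simp
  qed
  have Fd: "\<forall>p\<in>K. dist (F n p) (F (Suc n) p) < 2*(1/2::real)^n" for n
    using someI_ex[OF step[OF FI[of n]]] unfolding FS[of n] by simp
  define D where "D i p = F (Suc i) p - F i p" for i p
  have Fsum: "F n p = F 0 p + (\<Sum>i<n. D i p)" for n p
    unfolding D_def by (subst sum_lessThan_telescope) simp
  have Dle: "norm (D i p) \<le> 2*(1/2::real)^i" if "p \<in> K" for i p
    using Fd[of i] that unfolding D_def by (auto simp: dist_norm norm_minus_commute less_imp_le)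
  have sM: "summable (\<lambda>i. 2*(1/2::real)^i)"
    by (intro summable_mult summable_geometric) simp
  have ul: "uniform_limit K (\<lambda>n p. \<Sum>i<n. D i p) (\<lambda>p. \<Sum>i. D i p) sequentially"
    by (rule Weierstrass_m_test[OF Dle sM])
  have cD: "continuous_on K (\<lambda>p. \<Sum>i<n. D i p)" for n
    using FI unfolding D_def I_def by (intro continuous_intros) auto
  have cS: "continuous_on K (\<lambda>p. \<Sum>i. D i p)"
    by (rule uniform_limit_theorem[OF _ ul]) (use cD in auto)
  define f where "f p = F 0 p + (\<Sum>i. D i p)" for p
  have cf: "continuous_on K f" unfolding f_def using FI[of 0] cS unfolding I_def
    by (intro continuous_intros) auto
  have conv: "(\<lambda>n. F n p) \<longlonglongrightarrow> f p" if p: "p \<in> K" for p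
  proof -
    have "summable (\<lambda>i. D i p)"
      by (rule summable_comparison_test[OF _ sM]) (use Dle p in auto)
    then have "(\<lambda>n. \<Sum>i<n. D i p) \<longlonglongrightarrow> (\<Sum>i. D i p)" by (rule summable_LIMSEQ)
    then have "(\<lambda>n. F 0 p + (\<Sum>i<n. D i p)) \<longlonglongrightarrow> f p" unfolding f_def by (intro tendsto_intros)
    moreover have "(\<lambda>n. F n p) = (\<lambda>n. F 0 p + (\<Sum>i<n. D i p))" using Fsum by blast
    ultimately show ?thesis by simp
  qed
  have "f p \<in> closure (\<Phi> p)" if p: "p \<in> K" for p
  proof -
    have l1: "(\<lambda>n. infdist (F n p) (\<Phi> p)) \<longlonglongrightarrow> infdist (f p) (\<Phi> p)"
      by (rule tendsto_infdist[OF conv[OF p]])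
    have b: "0 \<le> infdist (F n p) (\<Phi> p) \<and> infdist (F n p) (\<Phi> p) \<le> (1/2::real)^n" for n
    proof -
      obtain w where "w \<in> \<Phi> p" "dist (F n p) w < (1/2)^n" using FI[of n] p unfolding I_def by blast
      then show ?thesis using infdist_le[of w "\<Phi> p" "F n p"] infdist_nonneg by auto
    qed
    have l2: "(\<lambda>n. infdist (F n p) (\<Phi> p)) \<longlonglongrightarrow> 0"
      by (rule tendsto_sandwich[of "\<lambda>_. 0" _ _ "\<lambda>n. (1/2::real)^n"])
         (use b in \<open>auto intro!: always_eventually LIMSEQ_power_zero\<close>)
    have "infdist (f p) (\<Phi> p) = 0" using LIMSEQ_unique[OF l1 l2] .
    then show ?thesis using in_closure_iff_infdist_zero ne p by blast
  qed
  then show ?thesis using cf by blast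
qed

definition eul :: "(real \<times> 'a::real_normed_vector \<Rightarrow> 'a) \<Rightarrow> real \<Rightarrow> 'a \<Rightarrow> real \<Rightarrow> nat \<Rightarrow> 'a" where
  "eul f a x0 h j = rec_nat x0 (\<lambda>m y. y + h *\<^sub>R f (a + real m * h, y)) j"

lemma eul_0[simp]: "eul f a x0 h 0 = x0" by (simp add: eul_def)
lemma eul_Suc[simp]: "eul f a x0 h (Suc j) = eul f a x0 h j + h *\<^sub>R f (a + real j * h, eul f a x0 h j)"
  by (simp add: eul_def)

lemma eul_tele:
  assumes "i \<le> j"
  shows "eul f a x0 h j - eul f a x0 h i = (\<Sum>m\<in>{i..<j}. h *\<^sub>R f (a + real m * h, eul f a x0 h m))"
  using assms
proof (induction j)
  case 0 then show ?case by simp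
next
  case (Suc j)
  show ?case
  proof (cases "i = Suc j")
    case True then show ?thesis by simp
  next
    case False
    then have "i \<le> j" using Suc by simp
    then show ?thesis using Suc by (simp add: sum.atLeastLessThan_Suc algebra_simps)
  qed
qed

lemma eul_ball:
  fixes f :: "real \<times> 'a::real_normed_vector \<Rightarrow> 'a"
  assumes ab: "a < b" and h: "h = (b - a) / real (Suc n)"
    and bd: "\<forall>p\<in>{a..b} \<times> cball x0 R. norm (f p) \<le> M" and MR: "M * (b - a) \<le> R" and M0: "0 \<le> M"
  shows "j \<le> Suc n \<Longrightarrow> norm (eul f a x0 h j - x0) \<le> real j * h * M"
proof (induction j)
  case 0 then show ?case by simp
next
  case (Suc j)
  have hpos: "h > 0" using ab h by simp
  have IH: "norm (eul f a x0 h j - x0) \<le> real j * h * M" using Suc by simp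
  have jn: "real j * h \<le> real n * h" using Suc hpos by simp
  have nh: "real n * h \<le> b - a" using h ab hpos by (simp add: field_simps)
  have "real j * h * M \<le> R"
  proof -
    have "real j * h * M \<le> (b - a) * M" using jn nh M0 by (intro mult_right_mono) auto
    then show ?thesis using MR by (simp add: mult.commute)
  qed
  then have inb: "eul f a x0 h j \<in> cball x0 R" using IH by (simp add: dist_norm norm_minus_commute)
  have "0 \<le> real j * h" using hpos by simp
  then have "a + real j * h \<in> {a..b}" using jn nh unfolding atLeastAtMost_iff by linarith
  then have fb: "norm (f (a + real j * h, eul f a x0 h j)) \<le> M" using bd inb by auto
  have "norm (eul f a x0 h (Suc j) - x0) = norm ((eul f a x0 h j - x0) + h *\<^sub>R f (a + real j * h, eul f a x0 h j))"
    by (simp add: algebra_simps)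
  also have "\<dots> \<le> norm (eul f a x0 h j - x0) + h * norm (f (a + real j * h, eul f a x0 h j))"
    using hpos by (metis norm_triangle_ineq norm_scaleR abs_of_pos)
  also have "\<dots> \<le> real j * h * M + h * M" using IH fb hpos by (intro add_mono mult_left_mono) auto
  also have "\<dots> = real (Suc j) * h * M" by (simp add: algebra_simps)
  finally show ?case .
qed

lemma dist_pair_le: "dist (a, b) (c, d) \<le> dist a c + dist b d"
  unfolding dist_Pair_Pair by (metis sqrt_sum_squares_le_sum_abs zero_le_dist abs_of_nonneg)

lemma peano_forward:
  fixes f :: "real \<times> 'a::euclidean_space \<Rightarrow> 'a"
  assumes ab: "a < b" and cf: "continuous_on ({a..b} \<times> cball x0 R) f"
    and bd: "\<forall>p\<in>{a..b} \<times> cball x0 R. norm (f p) \<le> M" and MR: "M * (b - a) \<le> R" and M0: "0 \<le> M"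
  shows "\<exists>y. y a = x0 \<and> (\<forall>t\<in>{a..b}. y t \<in> cball x0 R \<and>
              (y has_vector_derivative f (t, y t)) (at t within {a..b}))"
proof -
  define K where "K = {a..b} \<times> cball x0 R"
  define h where "h n = (b - a) / real (Suc n)" for n
  define Y where "Y n = eul f a x0 (h n)" for n
  define idx where "idx n t = nat \<lfloor>(t - a) / h n\<rfloor>" for n t
  define g where "g n t = Y n (idx n t)" for n t
  have hpos: "h n > 0" for n using ab by (simp add: h_def)
  have hSuc: "real (Suc n) * h n = b - a" for n by (simp add: h_def)
  have R0: "0 \<le> R" using MR M0 ab by (smt (verit) mult_nonneg_nonneg)
  have Yball: "norm (Y n j - x0) \<le> real j * h n * M" if "j \<le> Suc n" for n j
    unfolding Y_def by (rule eul_ball[OF ab h_def bd MR M0 that])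
  have Yin: "Y n j \<in> cball x0 R" if "j \<le> Suc n" for n j
  proof -
    have "real j * h n \<le> b - a" using that hSuc[of n] hpos[of n]
      by (metis mult_right_mono of_nat_le_iff less_imp_le)
    then have "real j * h n * M \<le> R" using M0 MR by (smt (verit) mult_right_mono mult.commute)
    then show ?thesis using Yball[OF that] by (simp add: dist_norm norm_minus_commute)
  qed
  have node: "(a + real m * h n, Y n m) \<in> K" if "m \<le> n" for n m
  proof -
    have "real m * h n \<le> real (Suc n) * h n" using that hpos[of n] by (intro mult_right_mono) auto
    then have "real m * h n \<le> b - a" using hSuc[of n] by simp
    moreover have "0 \<le> real m * h n" using hpos[of n] by simp
    ultimately have "a + real m * h n \<in> {a..b}" unfolding atLeastAtMost_iff by linarith
    then show ?thesis unfolding K_def using Yin[of m n] that by auto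
  qed
  have Ytele: "Y n j - Y n i = (\<Sum>m\<in>{i..<j}. h n *\<^sub>R f (a + real m * h n, Y n m))" if "i \<le> j" for n i j
    unfolding Y_def by (rule eul_tele[OF that])
  have Ydiff: "norm (Y n j - Y n i) \<le> (real j - real i) * h n * M" if "i \<le> j" "j \<le> Suc n" for n i j
  proof -
    have "norm (Y n j - Y n i) \<le> (\<Sum>m\<in>{i..<j}. norm (h n *\<^sub>R f (a + real m * h n, Y n m)))"
      unfolding Ytele[OF that(1)] by (rule norm_sum)
    also have "\<dots> \<le> (\<Sum>m\<in>{i..<j}. h n * M)"
    proof (rule sum_mono)
      fix m assume "m \<in> {i..<j}"
      then have "m \<le> n" using that by auto
      then have "norm (f (a + real m * h n, Y n m)) \<le> M" using bd node unfolding K_def by blast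
      then show "norm (h n *\<^sub>R f (a + real m * h n, Y n m)) \<le> h n * M"
        using hpos[of n] by (simp add: mult_left_mono)
    qed
    also have "\<dots> = (real j - real i) * h n * M" using that by (simp add: of_nat_diff)
    finally show ?thesis .
  qed
  have idx1: "real (idx n t) * h n \<le> t - a" if "t \<in> {a..b}" for n t
  proof -
    have "0 \<le> (t - a) / h n" using that hpos[of n] by simp
    then have "real (idx n t) = of_int \<lfloor>(t - a) / h n\<rfloor>" unfolding idx_def by simp
    also have "\<dots> \<le> (t - a) / h n" by (rule of_int_floor_le)
    finally show ?thesis using hpos[of n] by (simp add: field_simps)
  qed
  have idx2: "t - a < real (idx n t) * h n + h n" if "t \<in> {a..b}" for n t
  proof -
    have "0 \<le> (t - a) / h n" using that hpos[of n] by simp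
    then have "real (idx n t) = of_int \<lfloor>(t - a) / h n\<rfloor>" unfolding idx_def by simp
    moreover have "(t - a) / h n < of_int \<lfloor>(t - a) / h n\<rfloor> + 1" by (rule real_of_int_floor_add_one_gt)
    ultimately have "(t - a) / h n < real (idx n t) + 1" by simp
    then show ?thesis using hpos[of n] by (simp add: field_simps)
  qed
  have idx3: "idx n t \<le> Suc n" if "t \<in> {a..b}" for n t
  proof -
    have "real (idx n t) * h n \<le> real (Suc n) * h n" using idx1[OF that, of n] hSuc[of n] that by simp
    then show ?thesis using hpos[of n] by simp
  qed
  have idxmono: "idx n s \<le> idx n t" if "s \<le> t" for n s t
    unfolding idx_def using that hpos[of n] by (intro nat_mono floor_mono divide_right_mono) auto
  have gin: "g n t \<in> cball x0 R" if "t \<in> {a..b}" for n t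
    unfolding g_def using Yin idx3[OF that] by blast
  have gdiff: "norm (g n t - g n s) \<le> M * (t - s + h n)" if "s \<in> {a..b}" "t \<in> {a..b}" "s \<le> t" for n s t
  proof -
    have "norm (g n t - g n s) \<le> (real (idx n t) - real (idx n s)) * h n * M"
      unfolding g_def by (rule Ydiff[OF idxmono[OF that(3)] idx3[OF that(2)]])
    also have "\<dots> \<le> (t - s + h n) * M"
      using idx1[OF that(2), of n] idx2[OF that(1), of n] M0
      by (intro mult_right_mono) (auto simp: left_diff_distrib)
    finally show ?thesis by (simp add: mult.commute)
  qed
  have gdiff': "norm (g n t - g n s) \<le> M * (\<bar>t - s\<bar> + h n)" if "s \<in> {a..b}" "t \<in> {a..b}" for n s t
  proof (cases "s \<le> t")
    case True then show ?thesis using gdiff[OF that True] by simp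
  next
    case False then show ?thesis using gdiff[OF that(2,1)] by (simp add: norm_minus_commute)
  qed
  have hlim: "\<exists>N. \<forall>n\<ge>N. h n < c" if "c > 0" for c
  proof -
    obtain N where N: "(b - a) / c < real N" using reals_Archimedean2 by blast
    have "h n < c" if "n \<ge> N" for n
    proof -
      have "(b - a) / c < real (Suc n)" using N that by simp
      then have "b - a < c * real (Suc n)" using \<open>c > 0\<close> by (simp add: field_simps)
      then show ?thesis unfolding h_def using \<open>c > 0\<close> by (simp add: field_simps)
    qed
    then show ?thesis by blast
  qed
  (* Arzela-Ascoli type argument *)
  define Q where "Q = {q \<in> \<rat>. a \<le> q \<and> q \<le> b}"
  have Qne: "Q \<noteq> {}"
  proof -
    obtain r where "r \<in> \<rat>" "a < r" "r < b" using Rats_dense_in_real[OF ab] by blast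
    then have "r \<in> Q" unfolding Q_def by auto
    then show ?thesis by blast
  qed
  have Qc: "countable Q" unfolding Q_def by (rule countable_subset[OF _ countable_rat]) auto
  define qe where "qe = from_nat_into Q"
  have qeQ: "qe m \<in> Q" for m unfolding qe_def using from_nat_into[OF Qne] .
  have Qdense: "\<exists>q\<in>Q. \<bar>q - t\<bar> < e" if "t \<in> {a..b}" "e > 0" for t e
  proof -
    have "max a (t - e) < min b (t + e)" using that ab by auto
    then obtain r where "r \<in> \<rat>" "max a (t - e) < r" "r < min b (t + e)" using Rats_dense_in_real by blast
    then show ?thesis unfolding Q_def by (intro bexI[of _ r]) auto
  qed
  have QqeE: "\<exists>m. qe m = q" if "q \<in> Q" for q
    using that unfolding qe_def by (metis from_nat_into_to_nat_on[OF Qc])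
  have Qab: "q \<in> {a..b}" if "q \<in> Q" for q using that unfolding Q_def by auto
  interpret S: subseqs "\<lambda>m s. convergent (\<lambda>k. g (s k) (qe m))"
  proof
    fix m and s :: "nat \<Rightarrow> nat" assume "strict_mono s"
    have gb: "\<And>k. g (s k) (qe m) \<in> cball x0 R" using gin Qab qeQ by blast
    obtain l r where "strict_mono r" "((\<lambda>k. g (s k) (qe m)) \<circ> r) \<longlonglongrightarrow> l"
      using compact_cball[of x0 R, unfolded compact_def, rule_format, of "\<lambda>k. g (s k) (qe m)", OF gb] by blast
    then show "\<exists>r'. strict_mono r' \<and> convergent (\<lambda>k. g ((s \<circ> r') k) (qe m))"
      by (auto simp: convergent_def o_def)
  qed
  define d where "d = S.diagseq"
  have dmono: "strict_mono d" unfolding d_def by (rule S.subseq_diagseq)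
  have convq: "convergent (\<lambda>k. g (d k) (qe m))" for m
  proof -
    have "convergent (\<lambda>k. g ((S.diagseq \<circ> (+) (Suc m)) k) (qe m))"
      by (rule S.diagseq_holds) (auto simp: o_def intro: convergent_subseq_convergent[unfolded o_def])
    then have "convergent (\<lambda>k. g (d (k + Suc m)) (qe m))" by (simp add: d_def o_def add.commute)
    then show ?thesis by (rule convergent_ignore_initial_segment[THEN iffD1])
  qed
  have dge: "k \<le> d k" for k using dmono by (rule seq_suble)
  have hd: "\<exists>N. \<forall>k\<ge>N. h (d k) < c" if c0: "c > 0" for c
  proof -
    obtain N where N: "\<forall>n\<ge>N. h n < c" using hlim[OF c0] by blast
    then show ?thesis using dge by (meson order.trans)
  qed
  have cauchy: "Cauchy (\<lambda>k. g (d k) t)" if t: "t \<in> {a..b}" for t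
  proof (rule metric_CauchyI)
    fix e :: real assume e: "e > 0"
    define c where "c = e / (6 * (M + 1))"
    have c: "c > 0" using e M0 by (simp add: c_def)
    have Mc: "M * c < e / 6" using M0 e unfolding c_def by (simp add: field_simps)
    obtain q where q: "q \<in> Q" "\<bar>q - t\<bar> < c" using Qdense[OF t c] by blast
    obtain m where m: "qe m = q" using QqeE[OF q(1)] by blast
    have "Cauchy (\<lambda>k. g (d k) q)" using convq[of m] m by (simp add: Cauchy_convergent_iff)
    then obtain N1 where N1: "\<forall>k\<ge>N1. \<forall>l\<ge>N1. dist (g (d k) q) (g (d l) q) < e/3"
      using e unfolding Cauchy_def by (meson divide_pos_pos zero_less_numeral)
    obtain N2 where N2: "\<forall>k\<ge>N2. h (d k) < c" using hd[OF c] by blast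
    have bnd: "dist (g (d k) t) (g (d k) q) < e/3" if "k \<ge> N2" for k
    proof -
      have "dist (g (d k) t) (g (d k) q) = norm (g (d k) t - g (d k) q)" by (simp add: dist_norm)
      also have "\<dots> \<le> M * (\<bar>t - q\<bar> + h (d k))" by (rule gdiff'[OF Qab[OF q(1)] t])
      also have "\<dots> \<le> M * (c + c)" using q(2) N2 that M0 by (intro mult_left_mono) auto
      also have "\<dots> < e/3" using Mc by simp
      finally show ?thesis .
    qed
    show "\<exists>N. \<forall>k\<ge>N. \<forall>l\<ge>N. dist (g (d k) t) (g (d l) t) < e"
    proof (intro exI[of _ "max N1 N2"] allI impI)
      fix k l assume kl: "max N1 N2 \<le> k" "max N1 N2 \<le> l"
      have "dist (g (d k) t) (g (d l) t) \<le> dist (g (d k) t) (g (d k) q) + dist (g (d k) q) (g (d l) q) + dist (g (d l) q) (g (d l) t)"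
        by (meson dist_triangle order.trans add_right_mono)
      also have "\<dots> < e/3 + e/3 + e/3"
        using bnd[of k] bnd[of l] N1 kl by (intro add_strict_mono) (auto simp: dist_commute)
      finally show "dist (g (d k) t) (g (d l) t) < e" by simp
    qed
  qed
  define y where "y t = lim (\<lambda>k. g (d k) t)" for t
  have ylim: "(\<lambda>k. g (d k) t) \<longlonglongrightarrow> y t" if "t \<in> {a..b}" for t
    unfolding y_def using cauchy[OF that] by (simp add: Cauchy_convergent_iff convergent_LIMSEQ_iff)
  have hdlim: "(\<lambda>k. h (d k)) \<longlonglongrightarrow> 0"
  proof (rule LIMSEQ_I)
    fix r :: real assume "r > 0"
    then obtain N where "\<forall>k\<ge>N. h (d k) < r" using hd by blast
    then show "\<exists>N. \<forall>k\<ge>N. norm (h (d k) - 0) < r" using hpos by (auto intro!: exI[of _ N] simp: less_imp_le)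
  qed
  define T where "T k t = real (idx (d k) t) * h (d k)" for k t
  have Tlim: "(\<lambda>k. T k t) \<longlonglongrightarrow> t - a" if t: "t \<in> {a..b}" for t
  proof (rule LIMSEQ_I)
    fix r :: real assume "r > 0"
    then obtain N where N: "\<forall>k\<ge>N. h (d k) < r" using hd by blast
    have "norm (T k t - (t - a)) < r" if "k \<ge> N" for k
      using idx1[OF t, of "d k"] idx2[OF t, of "d k"] N that unfolding T_def by auto
    then show "\<exists>N. \<forall>k\<ge>N. norm (T k t - (t - a)) < r" by blast
  qed
  have yin: "y t \<in> cball x0 R" if t: "t \<in> {a..b}" for t
    by (rule Lim_in_closed_set[OF closed_cball _ _ ylim[OF t]]) (use gin t in auto)
  have idxa: "idx n a = 0" for n unfolding idx_def by simp
  have ya: "y a = x0"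
  proof -
    have "(\<lambda>k. g (d k) a) = (\<lambda>k. x0)" unfolding g_def idxa Y_def by simp
    then show ?thesis using ylim[of a] ab LIMSEQ_unique[OF _ tendsto_const] by fastforce
  qed
  have ylip: "norm (y t - y s) \<le> M * (t - s)" if s: "s \<in> {a..b}" and t: "t \<in> {a..b}" and st: "s \<le> t" for s t
  proof (rule tendsto_le[OF trivial_limit_sequentially])
    show "(\<lambda>k. M * (t - s + h (d k))) \<longlonglongrightarrow> M * (t - s)"
      using hdlim by (auto intro!: tendsto_eq_intros)
    show "(\<lambda>k. norm (g (d k) t - g (d k) s)) \<longlonglongrightarrow> norm (y t - y s)"
      using ylim[OF s] ylim[OF t] by (intro tendsto_intros)
    show "\<forall>\<^sub>F k in sequentially. norm (g (d k) t - g (d k) s) \<le> M * (t - s + h (d k))"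
      using gdiff[OF s t st] by simp
  qed
  have cK: "compact K" unfolding K_def by (intro compact_Times compact_Icc compact_cball)
  have est: "\<exists>\<delta>>0. \<forall>s\<in>{a..b}. \<forall>t\<in>{a..b}. s \<le> t \<longrightarrow> t - s < \<delta> \<longrightarrow>
      norm (y t - y s - (t - s) *\<^sub>R f (s, y s)) \<le> \<eta> * (t - s)" if \<eta>: "\<eta> > 0" for \<eta>
  proof -
    obtain \<delta>0 where \<delta>0: "\<delta>0 > 0" "\<forall>p\<in>K. \<forall>p'\<in>K. dist p' p < \<delta>0 \<longrightarrow> dist (f p') (f p) < \<eta>"
      using compact_uniformly_continuous[OF cf[folded K_def] cK] \<eta> unfolding uniformly_continuous_on_def by blast
    define \<delta> where "\<delta> = \<delta>0 / (2 * (1 + M))"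
    have \<delta>: "\<delta> > 0" using \<delta>0 M0 by (simp add: \<delta>_def)
    show ?thesis
    proof (intro exI[of _ \<delta>] conjI ballI impI \<delta>)
      fix s t assume s: "s \<in> {a..b}" and t: "t \<in> {a..b}" and st: "s \<le> t" and tsd: "t - s < \<delta>"
      have ysK: "(s, y s) \<in> K" unfolding K_def using s yin[OF s] by auto
      have ts1: "(1 + M) * (t - s) < \<delta>0 / 2"
      proof -
        have "(1 + M) * (t - s) < (1 + M) * \<delta>" using tsd M0 by (intro mult_strict_left_mono) auto
        also have "\<dots> = \<delta>0 / 2" unfolding \<delta>_def using M0 by (simp add: field_simps)
        finally show ?thesis .
      qed
      have ev: "\<forall>\<^sub>F k in sequentially. (2 + M) * h (d k) + dist (g (d k) s) (y s) < \<delta>0/2"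
      proof -
        have "(\<lambda>k. (2 + M) * h (d k) + dist (g (d k) s) (y s)) \<longlonglongrightarrow> (2 + M) * 0 + dist (y s) (y s)"
          using hdlim ylim[OF s] by (intro tendsto_intros)
        then have "(\<lambda>k. (2 + M) * h (d k) + dist (g (d k) s) (y s)) \<longlonglongrightarrow> 0" by simp
        then show ?thesis using \<delta>0(1) by (intro order_tendstoD) auto
      qed
      have ineq: "\<forall>\<^sub>F k in sequentially. norm (g (d k) t - g (d k) s - (T k t - T k s) *\<^sub>R f (s, y s)) \<le> \<eta> * (T k t - T k s)"
      proof (rule eventually_mono[OF ev])
        fix k assume k: "(2 + M) * h (d k) + dist (g (d k) s) (y s) < \<delta>0/2"
        define n where "n = d k"
        define i where "i = idx n s"
        define j where "j = idx n t"
        have ij: "i \<le> j" unfolding i_def j_def using idxmono[OF st] .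
        have jn: "j \<le> Suc n" unfolding j_def using idx3[OF t] .
        have Tij: "T k t - T k s = (real j - real i) * h n" unfolding T_def i_def j_def n_def
          by (simp add: algebra_simps)
        have i1: "real i * h n \<le> s - a" "s - a < real i * h n + h n"
          unfolding i_def using idx1[OF s] idx2[OF s] by auto
        have j1: "real j * h n \<le> t - a" "t - a < real j * h n + h n"
          unfolding j_def using idx1[OF t] idx2[OF t] by auto
        have hn: "h n > 0" by (rule hpos)
        have gs: "g n s = Y n i" unfolding g_def i_def ..
        have gt: "g n t = Y n j" unfolding g_def j_def ..
        have close: "dist (f (a + real m * h n, Y n m)) (f (s, y s)) < \<eta>" if m: "m \<in> {i..<j}" for m
        proof -
          have mn: "m \<le> n" using m jn by auto
          have mK: "(a + real m * h n, Y n m) \<in> K" by (rule node[OF mn])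
          have m1: "real i * h n \<le> real m * h n" "real m * h n \<le> real j * h n" using m hn by auto
          have d1a: "a + real m * h n - s \<le> t - s + h n" using m1 j1 hn by linarith
          have d1b: "s - (a + real m * h n) \<le> t - s + h n" using m1 i1 st by linarith
          have d1: "dist (a + real m * h n) s \<le> (t - s) + h n"
            using d1a d1b unfolding dist_real_def abs_le_iff by linarith
          have "norm (Y n m - Y n i) \<le> (real m - real i) * h n * M"
            using Ydiff[of i m n] m jn by auto
          also have "\<dots> \<le> ((t - s) + h n) * M"
          proof (rule mult_right_mono[OF _ M0])
            show "(real m - real i) * h n \<le> t - s + h n"
              unfolding left_diff_distrib using m1 i1 j1 by linarith
          qed
          finally have d2a: "dist (Y n m) (Y n i) \<le> ((t - s) + h n) * M" by (simp add: dist_norm)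
          have d2: "dist (Y n m) (y s) \<le> ((t - s) + h n) * M + dist (g n s) (y s)"
            using d2a dist_triangle[of "Y n m" "y s" "Y n i"] gs by simp
          have "dist (a + real m * h n, Y n m) (s, y s) \<le> dist (a + real m * h n) s + dist (Y n m) (y s)"
            by (rule dist_pair_le)
          also have "\<dots> \<le> (1 + M) * (t - s) + ((2 + M) * h n + dist (g n s) (y s))"
            using d1 d2 hn by (simp add: algebra_simps)
          also have "\<dots> < \<delta>0/2 + \<delta>0/2" using ts1 k unfolding n_def by linarith
          finally show ?thesis using \<delta>0(2) mK ysK by auto
        qed
        have "g n t - g n s - (T k t - T k s) *\<^sub>R f (s, y s)
              = (\<Sum>m\<in>{i..<j}. h n *\<^sub>R (f (a + real m * h n, Y n m) - f (s, y s)))"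
        proof -
          have "(\<Sum>m\<in>{i..<j}. h n *\<^sub>R f (s, y s)) = (real j - real i) *\<^sub>R (h n *\<^sub>R f (s, y s))"
            using ij by (simp add: sum_constant_scaleR of_nat_diff)
          then show ?thesis unfolding gs gt Ytele[OF ij] Tij
            by (simp add: scaleR_diff_right sum_subtractf)
        qed
        then have "norm (g n t - g n s - (T k t - T k s) *\<^sub>R f (s, y s))
              \<le> (\<Sum>m\<in>{i..<j}. norm (h n *\<^sub>R (f (a + real m * h n, Y n m) - f (s, y s))))"
          by (simp only: norm_sum)
        also have "\<dots> \<le> (\<Sum>m\<in>{i..<j}. h n * \<eta>)"
        proof (rule sum_mono)
          fix m assume "m \<in> {i..<j}"
          then have "norm (f (a + real m * h n, Y n m) - f (s, y s)) \<le> \<eta>" using close by (simp add: dist_norm less_imp_le)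
          then show "norm (h n *\<^sub>R (f (a + real m * h n, Y n m) - f (s, y s))) \<le> h n * \<eta>"
            using hn by (simp add: mult_left_mono)
        qed
        also have "\<dots> = \<eta> * (T k t - T k s)" unfolding Tij using ij by (simp add: of_nat_diff)
        finally show "norm (g (d k) t - g (d k) s - (T k t - T k s) *\<^sub>R f (s, y s)) \<le> \<eta> * (T k t - T k s)"
          unfolding n_def .
      qed
      show "norm (y t - y s - (t - s) *\<^sub>R f (s, y s)) \<le> \<eta> * (t - s)"
      proof (rule tendsto_le[OF trivial_limit_sequentially _ _ ineq])
        show "(\<lambda>k. \<eta> * (T k t - T k s)) \<longlonglongrightarrow> \<eta> * (t - s)"
          using Tlim[OF t] Tlim[OF s] by (auto intro!: tendsto_eq_intros)
        show "(\<lambda>k. norm (g (d k) t - g (d k) s - (T k t - T k s) *\<^sub>R f (s, y s))) \<longlonglongrightarrow> norm (y t - y s - (t - s) *\<^sub>R f (s, y s))"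
          using Tlim[OF t] Tlim[OF s] ylim[OF s] ylim[OF t] by (auto intro!: tendsto_eq_intros)
      qed
    qed
  qed
  have deriv: "(y has_vector_derivative f (s, y s)) (at s within {a..b})" if s: "s \<in> {a..b}" for s
    unfolding has_vector_derivative_def has_derivative_within_alt
  proof (intro conjI allI impI bounded_linear_scaleR_left)
    fix e :: real assume e: "e > 0"
    obtain \<delta>1 where \<delta>1: "\<delta>1 > 0" "\<forall>s\<in>{a..b}. \<forall>t\<in>{a..b}. s \<le> t \<longrightarrow> t - s < \<delta>1 \<longrightarrow>
      norm (y t - y s - (t - s) *\<^sub>R f (s, y s)) \<le> (e/2) * (t - s)" using est[of "e/2"] e by auto
    obtain \<delta>0 where \<delta>0: "\<delta>0 > 0" "\<forall>p\<in>K. \<forall>p'\<in>K. dist p' p < \<delta>0 \<longrightarrow> dist (f p') (f p) < e/2"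
      using compact_uniformly_continuous[OF cf[folded K_def] cK] e unfolding uniformly_continuous_on_def
      by (meson half_gt_zero)
    define \<delta> where "\<delta> = min \<delta>1 (\<delta>0 / (1 + M))"
    have \<delta>: "\<delta> > 0" using \<delta>1 \<delta>0 M0 by (simp add: \<delta>_def)
    show "\<exists>d>0. \<forall>t\<in>{a..b}. norm (t - s) < d \<longrightarrow> norm (y t - y s - (t - s) *\<^sub>R f (s, y s)) \<le> e * norm (t - s)"
    proof (intro exI[of _ \<delta>] conjI ballI impI \<delta>)
      fix t assume t: "t \<in> {a..b}" and ts: "norm (t - s) < \<delta>"
      show "norm (y t - y s - (t - s) *\<^sub>R f (s, y s)) \<le> e * norm (t - s)"
      proof (cases "s \<le> t")
        case True
        then have "norm (y t - y s - (t - s) *\<^sub>R f (s, y s)) \<le> (e/2) * (t - s)"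
          using \<delta>1(2) s t ts unfolding \<delta>_def by auto
        also have "\<dots> \<le> e * norm (t - s)" using True e by simp
        finally show ?thesis .
      next
        case False
        then have ts': "t \<le> s" by simp
        have A: "norm (y s - y t - (s - t) *\<^sub>R f (t, y t)) \<le> (e/2) * (s - t)"
          using \<delta>1(2) s t ts ts' unfolding \<delta>_def by (auto simp: abs_minus_commute)
        have "dist (t, y t) (s, y s) \<le> dist t s + dist (y t) (y s)" by (rule dist_pair_le)
        also have "\<dots> \<le> (s - t) + M * (s - t)"
          using ylip[OF t s ts'] ts' by (simp add: dist_real_def dist_norm norm_minus_commute)
        also have "\<dots> = (1 + M) * (s - t)" by (simp add: algebra_simps)
        also have "\<dots> < (1 + M) * (\<delta>0 / (1 + M))"
        proof -
          have "s - t < \<delta>0 / (1 + M)" using ts ts' unfolding \<delta>_def by auto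
          then show ?thesis using M0 by (intro mult_strict_left_mono) auto
        qed
        also have "\<dots> = \<delta>0" using M0 by simp
        finally have "dist (f (t, y t)) (f (s, y s)) < e/2"
          using \<delta>0(2) yin[OF s] yin[OF t] s t unfolding K_def by auto
        then have B: "norm (f (s, y s) - f (t, y t)) \<le> e/2" by (simp add: dist_norm norm_minus_commute)
        have "y t - y s - (t - s) *\<^sub>R f (s, y s) = - (y s - y t - (s - t) *\<^sub>R f (t, y t)) + (s - t) *\<^sub>R (f (s, y s) - f (t, y t))"
          by (simp add: algebra_simps)
        then have "norm (y t - y s - (t - s) *\<^sub>R f (s, y s)) \<le> norm (y s - y t - (s - t) *\<^sub>R f (t, y t)) + (s - t) * norm (f (s, y s) - f (t, y t))"
          using ts' by (metis (no_types, lifting) abs_of_nonneg diff_ge_0_iff_ge norm_minus_cancel norm_scaleR norm_triangle_ineq)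
        also have "\<dots> \<le> (e/2) * (s - t) + (s - t) * (e/2)"
          using A B ts' by (intro add_mono mult_left_mono) auto
        also have "\<dots> = e * norm (t - s)" using ts' by simp
        finally show ?thesis .
      qed
    qed
  qed
  show ?thesis using ya yin deriv by blast
qed

lemma nn_integral_superadd:
  fixes u v :: "'a \<Rightarrow> ennreal"
  shows "integral\<^sup>N M u + integral\<^sup>N M v \<le> integral\<^sup>N M (\<lambda>x. u x + v x)"
proof -
  let ?G = "\<lambda>w. {g. simple_function M g \<and> g \<le> w}"
  have ne: "?G w \<noteq> {}" for w :: "'a \<Rightarrow> ennreal"
  proof -
    have "(\<lambda>_. 0) \<in> ?G w" by (auto simp: le_fun_def)
    then show ?thesis by blast
  qed
  have "integral\<^sup>N M u + integral\<^sup>N M v = (SUP g1\<in>?G u. integral\<^sup>S M g1) + (SUP g2\<in>?G v. integral\<^sup>S M g2)"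
    unfolding nn_integral_def ..
  also have "\<dots> = (SUP g1\<in>?G u. integral\<^sup>S M g1 + (SUP g2\<in>?G v. integral\<^sup>S M g2))"
    by (rule ennreal_SUP_add_left[OF ne, symmetric])
  also have "\<dots> \<le> integral\<^sup>N M (\<lambda>x. u x + v x)"
  proof (rule SUP_least)
    fix g1 assume g1: "g1 \<in> ?G u"
    have "integral\<^sup>S M g1 + (SUP g2\<in>?G v. integral\<^sup>S M g2) = (SUP g2\<in>?G v. integral\<^sup>S M g1 + integral\<^sup>S M g2)"
      using ennreal_SUP_add_left[OF ne[of v], where f="\<lambda>g2. integral\<^sup>S M g2" and c="integral\<^sup>S M g1"]
      by (simp add: add.commute)
    also have "\<dots> \<le> integral\<^sup>N M (\<lambda>x. u x + v x)"
    proof (rule SUP_least)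
      fix g2 assume g2: "g2 \<in> ?G v"
      have "integral\<^sup>S M g1 + integral\<^sup>S M g2 = integral\<^sup>S M (\<lambda>x. g1 x + g2 x)"
        using g1 g2 by (intro simple_integral_add[symmetric]) auto
      also have "\<dots> = integral\<^sup>N M (\<lambda>x. g1 x + g2 x)"
        using g1 g2 by (intro nn_integral_eq_simple_integral[symmetric]) auto
      also have "\<dots> \<le> integral\<^sup>N M (\<lambda>x. u x + v x)"
        using g1 g2 by (intro nn_integral_mono add_mono) (auto simp: le_fun_def)
      finally show "integral\<^sup>S M g1 + integral\<^sup>S M g2 \<le> integral\<^sup>N M (\<lambda>x. u x + v x)" .
    qed
    finally show "integral\<^sup>S M g1 + (SUP g2\<in>?G v. integral\<^sup>S M g2) \<le> integral\<^sup>N M (\<lambda>x. u x + v x)" .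
  qed
  finally show ?thesis .
qed

lemma nn_integral_subadd_disj:
  fixes f :: "'a \<Rightarrow> ennreal"
  assumes A: "A \<in> sets M" and B: "B \<in> sets M" and AB: "A \<inter> B = {}"
  shows "(\<integral>\<^sup>+x. f x * indicator (A \<union> B) x \<partial>M) \<le> (\<integral>\<^sup>+x. f x * indicator A x \<partial>M) + (\<integral>\<^sup>+x. f x * indicator B x \<partial>M)"
  unfolding nn_integral_def[of M "\<lambda>x. f x * indicator (A \<union> B) x"]
proof (rule SUP_least)
  fix g assume g: "g \<in> {g. simple_function M g \<and> g \<le> (\<lambda>x. f x * indicator (A \<union> B) x)}"
  then have sg: "simple_function M g" and gle: "\<And>x. g x \<le> f x * indicator (A \<union> B) x" by (auto simp: le_fun_def)
  have split: "g x = g x * indicator A x + g x * indicator B x" for x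
  proof (cases "x \<in> A \<union> B")
    case True then show ?thesis using AB by (auto simp: indicator_def)
  next
    case False then have "g x = 0" using gle[of x] by simp
    then show ?thesis by simp
  qed
  have sA: "simple_function M (\<lambda>x. g x * indicator A x)" using sg A by (intro simple_function_mult simple_function_indicator)
  have sB: "simple_function M (\<lambda>x. g x * indicator B x)" using sg B by (intro simple_function_mult simple_function_indicator)
  have "integral\<^sup>S M g = integral\<^sup>N M g" using nn_integral_eq_simple_integral[OF sg] by simp
  also have "\<dots> = integral\<^sup>N M (\<lambda>x. g x * indicator A x + g x * indicator B x)"
    using split by (intro nn_integral_cong) auto
  also have "\<dots> = integral\<^sup>N M (\<lambda>x. g x * indicator A x) + integral\<^sup>N M (\<lambda>x. g x * indicator B x)"
    using sA sB by (intro nn_integral_add borel_measurable_simple_function)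
  also have "\<dots> \<le> (\<integral>\<^sup>+x. f x * indicator A x \<partial>M) + (\<integral>\<^sup>+x. f x * indicator B x \<partial>M)"
  proof (intro add_mono nn_integral_mono)
    fix x
    show "g x * indicator A x \<le> f x * indicator A x" using gle[of x] by (auto simp: indicator_def)
    show "g x * indicator B x \<le> f x * indicator B x" using gle[of x] by (auto simp: indicator_def)
  qed
  finally show "integral\<^sup>S M g \<le> (\<integral>\<^sup>+x. f x * indicator A x \<partial>M) + (\<integral>\<^sup>+x. f x * indicator B x \<partial>M)" .
qed

lemma nn_integral_add_disj:
  fixes f :: "'a \<Rightarrow> ennreal"
  assumes A: "A \<in> sets M" and B: "B \<in> sets M" and AB: "A \<inter> B = {}"
  shows "(\<integral>\<^sup>+x. f x * indicator (A \<union> B) x \<partial>M) = (\<integral>\<^sup>+x. f x * indicator A x \<partial>M) + (\<integral>\<^sup>+x. f x * indicator B x \<partial>M)"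
proof (rule antisym[OF nn_integral_subadd_disj[OF assms]])
  have "f x * indicator (A \<union> B) x = f x * indicator A x + f x * indicator B x" for x
    using AB by (auto simp: indicator_def)
  then show "(\<integral>\<^sup>+x. f x * indicator A x \<partial>M) + (\<integral>\<^sup>+x. f x * indicator B x \<partial>M) \<le> (\<integral>\<^sup>+x. f x * indicator (A \<union> B) x \<partial>M)"
    using nn_integral_superadd[of M "\<lambda>x. f x * indicator A x" "\<lambda>x. f x * indicator B x"] by simp
qed

abbreviation "Pint S h \<equiv> (\<integral>\<^sup>+ t\<in>S. e2ennreal (h t) \<partial>lebesgue)"
abbreviation "Nint S h \<equiv> (\<integral>\<^sup>+ t\<in>S. e2ennreal (- h t) \<partial>lebesgue)"

lemma ext_integral_alt: "ext_integral S h = (if Nint S h = \<infinity> then \<infinity> else enn2ereal (Pint S h) - enn2ereal (Nint S h))"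
  unfolding ext_integral_def ..

lemma ext_not_minf: "ext_integral S h \<noteq> -\<infinity>"
proof -
  have "enn2ereal (Pint S h) - enn2ereal (Nint S h) \<noteq> -\<infinity>" if "Nint S h \<noteq> \<infinity>"
  proof -
    have "enn2ereal (Nint S h) \<noteq> \<infinity>" using that enn2ereal_eq_top_iff by (metis infinity_ennreal_def)
    moreover have "enn2ereal (Pint S h) \<noteq> -\<infinity>" using enn2ereal_nonneg[of "Pint S h"] by auto
    ultimately show ?thesis using enn2ereal_nonneg[of "Nint S h"] by (cases "enn2ereal (Pint S h)"; cases "enn2ereal (Nint S h)") auto
  qed
  then show ?thesis unfolding ext_integral_alt by auto
qed

lemma ae_Icc_Ioo:
  fixes p q :: real
  shows "AE t in lebesgue. t \<in> {p..q} \<longrightarrow> t \<in> {p<..<q}"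
proof (rule AE_I')
  show "{p, q} \<in> null_sets lebesgue" by simp
  show "{t \<in> space lebesgue. \<not> (t \<in> {p..q} \<longrightarrow> t \<in> {p<..<q})} \<subseteq> {p, q}" by auto
qed

lemma set_nn_integral_cong_Ioo:
  fixes p q :: real and F G :: "real \<Rightarrow> ennreal"
  assumes "\<And>t. t \<in> {p<..<q} \<Longrightarrow> F t = G t"
  shows "(\<integral>\<^sup>+ t\<in>{p..q}. F t \<partial>lebesgue) = (\<integral>\<^sup>+ t\<in>{p..q}. G t \<partial>lebesgue)"
  by (rule nn_integral_cong_AE) (use ae_Icc_Ioo[of p q] assms in \<open>auto elim!: AE_mp simp: indicator_def\<close>)

lemma set_nn_integral_mono_Ioo:
  fixes p q :: real and F G :: "real \<Rightarrow> ennreal"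
  assumes "\<And>t. t \<in> {p<..<q} \<Longrightarrow> F t \<le> G t"
  shows "(\<integral>\<^sup>+ t\<in>{p..q}. F t \<partial>lebesgue) \<le> (\<integral>\<^sup>+ t\<in>{p..q}. G t \<partial>lebesgue)"
  by (rule nn_integral_mono_AE) (use ae_Icc_Ioo[of p q] assms in \<open>auto elim!: AE_mp simp: indicator_def\<close>)

lemma ext_integral_cong_Ioo:
  fixes p q :: real
  assumes "\<And>t. t \<in> {p<..<q} \<Longrightarrow> h1 t = h2 t"
  shows "ext_integral {p..q} h1 = ext_integral {p..q} h2"
proof -
  have "Pint {p..q} h1 = Pint {p..q} h2" by (rule set_nn_integral_cong_Ioo) (use assms in auto)
  moreover have "Nint {p..q} h1 = Nint {p..q} h2" by (rule set_nn_integral_cong_Ioo) (use assms in auto)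
  ultimately show ?thesis unfolding ext_integral_alt by simp
qed

lemma set_nn_integral_split:
  fixes p m q :: real and F :: "real \<Rightarrow> ennreal"
  assumes "p \<le> m" "m \<le> q"
  shows "(\<integral>\<^sup>+ t\<in>{p..q}. F t \<partial>lebesgue) = (\<integral>\<^sup>+ t\<in>{p..m}. F t \<partial>lebesgue) + (\<integral>\<^sup>+ t\<in>{m..q}. F t \<partial>lebesgue)"
proof -
  have e: "{p..q} = {p..m} \<union> {m<..q}" using assms by auto
  have "(\<integral>\<^sup>+ t\<in>{p..q}. F t \<partial>lebesgue) = (\<integral>\<^sup>+ t\<in>{p..m}. F t \<partial>lebesgue) + (\<integral>\<^sup>+ t\<in>{m<..q}. F t \<partial>lebesgue)"
    unfolding e by (rule nn_integral_add_disj) auto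
  moreover have "(\<integral>\<^sup>+ t\<in>{m<..q}. F t \<partial>lebesgue) = (\<integral>\<^sup>+ t\<in>{m..q}. F t \<partial>lebesgue)"
  proof (rule nn_integral_cong_AE)
    have "AE t in lebesgue. t \<noteq> m"
      by (rule AE_I'[of "{m}"]) auto
    then show "AE t in lebesgue. F t * indicator {m<..q} t = F t * indicator {m..q} t"
      by (rule AE_mp) (auto simp: indicator_def)
  qed
  ultimately show ?thesis by simp
qed

lemma ext_integral_split:
  fixes p m q :: real
  assumes "p \<le> m" "m \<le> q"
  shows "ext_integral {p..q} h \<le> ext_integral {p..m} h + ext_integral {m..q} h"
proof -
  have P: "Pint {p..q} h = Pint {p..m} h + Pint {m..q} h" by (rule set_nn_integral_split[OF assms])
  have N: "Nint {p..q} h = Nint {p..m} h + Nint {m..q} h" by (rule set_nn_integral_split[OF assms])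
  show ?thesis
  proof (cases "Nint {p..m} h = \<infinity> \<or> Nint {m..q} h = \<infinity>")
    case True
    then have "ext_integral {p..m} h = \<infinity> \<or> ext_integral {m..q} h = \<infinity>"
      unfolding ext_integral_alt by auto
    then have "ext_integral {p..m} h + ext_integral {m..q} h = \<infinity>"
      using ext_not_minf[of "{p..m}" h] ext_not_minf[of "{m..q}" h] by auto
    then show ?thesis by (metis ereal_less_eq(1))
  next
    case False
    then have f1: "Nint {p..m} h \<noteq> \<infinity>" and f2: "Nint {m..q} h \<noteq> \<infinity>" by auto
    then have f3: "Nint {p..q} h \<noteq> \<infinity>" unfolding N by (simp add: infinity_ennreal_def)
    obtain n1 where n1: "enn2ereal (Nint {p..m} h) = ereal n1"
      using f1 enn2ereal_nonneg[of "Nint {p..m} h"] enn2ereal_eq_top_iff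
      by (cases "enn2ereal (Nint {p..m} h)") (auto simp: infinity_ennreal_def)
    obtain n2 where n2: "enn2ereal (Nint {m..q} h) = ereal n2"
      using f2 enn2ereal_nonneg[of "Nint {m..q} h"] enn2ereal_eq_top_iff
      by (cases "enn2ereal (Nint {m..q} h)") (auto simp: infinity_ennreal_def)
    have a1: "enn2ereal (Pint {p..m} h) \<noteq> -\<infinity>" "enn2ereal (Pint {m..q} h) \<noteq> -\<infinity>"
      using enn2ereal_nonneg by (metis MInfty_neq_ereal(1) ereal_less_eq(2) ereal_infty_less_eq(2) zero_ereal_def)+
    have "ext_integral {p..q} h = enn2ereal (Pint {p..m} h) + enn2ereal (Pint {m..q} h) - (ereal n1 + ereal n2)"
      unfolding ext_integral_alt using f3 unfolding P N plus_ennreal.rep_eq n1 n2 by simp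
    also have "\<dots> = (enn2ereal (Pint {p..m} h) - ereal n1) + (enn2ereal (Pint {m..q} h) - ereal n2)"
      using a1 by (cases "enn2ereal (Pint {p..m} h)"; cases "enn2ereal (Pint {m..q} h)") auto
    also have "\<dots> = ext_integral {p..m} h + ext_integral {m..q} h"
      unfolding ext_integral_alt using f1 f2 n1 n2 by simp
    finally show ?thesis by simp
  qed
qed

lemma ext_integral_bound:
  fixes p q c1 c2 :: real
  assumes pq: "p \<le> q" and hb: "\<And>t. t \<in> {p<..<q} \<Longrightarrow> ereal c1 \<le> h t \<and> h t \<le> ereal c2"
  shows "ext_integral {p..q} h \<le> ereal (c2 * (q - p))"
proof -
  have P: "Pint {p..q} h \<le> ennreal c2 * ennreal (q - p)"
  proof -
    have "Pint {p..q} h \<le> (\<integral>\<^sup>+ t\<in>{p..q}. ennreal c2 \<partial>lebesgue)"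
    proof (rule set_nn_integral_mono_Ioo)
      fix t assume "t \<in> {p<..<q}"
      then have "h t \<le> ereal c2" using hb by blast
      then show "e2ennreal (h t) \<le> ennreal c2" by (metis e2ennreal_mono e2ennreal_ereal)
    qed
    also have "\<dots> = ennreal c2 * ennreal (q - p)" using pq by (subst nn_integral_cmult_indicator) auto
    finally show ?thesis .
  qed
  have N1: "ennreal (- c2) * ennreal (q - p) \<le> Nint {p..q} h"
  proof -
    have "(\<integral>\<^sup>+ t\<in>{p..q}. ennreal (- c2) \<partial>lebesgue) \<le> Nint {p..q} h"
    proof (rule set_nn_integral_mono_Ioo)
      fix t assume "t \<in> {p<..<q}"
      then have "h t \<le> ereal c2" using hb by blast
      then have "- h t \<ge> ereal (- c2)" by (metis ereal_minus_le_minus uminus_ereal.simps(1))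
      then show "ennreal (- c2) \<le> e2ennreal (- h t)" by (metis e2ennreal_mono e2ennreal_ereal)
    qed
    moreover have "(\<integral>\<^sup>+ t\<in>{p..q}. ennreal (- c2) \<partial>lebesgue) = ennreal (- c2) * ennreal (q - p)"
      using pq by (subst nn_integral_cmult_indicator) auto
    ultimately show ?thesis by simp
  qed
  have N2: "Nint {p..q} h \<le> ennreal (- c1) * ennreal (q - p)"
  proof -
    have "Nint {p..q} h \<le> (\<integral>\<^sup>+ t\<in>{p..q}. ennreal (- c1) \<partial>lebesgue)"
    proof (rule set_nn_integral_mono_Ioo)
      fix t assume "t \<in> {p<..<q}"
      then have "ereal c1 \<le> h t" using hb by blast
      then have "- h t \<le> ereal (- c1)" by (metis ereal_minus_le_minus uminus_ereal.simps(1))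
      then show "e2ennreal (- h t) \<le> ennreal (- c1)" by (metis e2ennreal_mono e2ennreal_ereal)
    qed
    also have "\<dots> = ennreal (- c1) * ennreal (q - p)" using pq by (subst nn_integral_cmult_indicator) auto
    finally show ?thesis .
  qed
  have Nfin: "Nint {p..q} h \<noteq> \<infinity>"
    using N2 by (metis ennreal_mult_eq_top_iff ennreal_neq_top infinity_ennreal_def neq_top_trans)
  have "ext_integral {p..q} h = enn2ereal (Pint {p..q} h) - enn2ereal (Nint {p..q} h)"
    unfolding ext_integral_alt using Nfin by simp
  also have "\<dots> \<le> enn2ereal (ennreal c2 * ennreal (q - p)) - enn2ereal (ennreal (- c2) * ennreal (q - p))"
  proof (rule ereal_minus_mono)
    show "enn2ereal (Pint {p..q} h) \<le> enn2ereal (ennreal c2 * ennreal (q - p))" using P by (simp add: less_eq_ennreal.rep_eq)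
    show "enn2ereal (ennreal (- c2) * ennreal (q - p)) \<le> enn2ereal (Nint {p..q} h)" using N1 by (simp add: less_eq_ennreal.rep_eq)
  qed
  also have "\<dots> = ereal (c2 * (q - p))"
  proof (cases "c2 \<ge> 0")
    case True
    then show ?thesis using pq by (simp add: ennreal_mult'[symmetric] ennreal_neg zero_ennreal.rep_eq)
  next
    case False
    then have "0 \<le> - (c2 * (q - p))" using pq by (simp add: mult_nonpos_nonneg)
    then show ?thesis using pq False by (simp add: ennreal_mult'[symmetric] ennreal_neg zero_ennreal.rep_eq enn2ereal_ennreal)
  qed
  finally show ?thesis .
qed

lemma lsc_bounded_below:
  fixes F :: "'b::metric_space \<Rightarrow> ereal"
  assumes lsc: "lsc_on S F" and C: "compact C" "C \<subseteq> S" and nm: "\<forall>p\<in>C. F p \<noteq> -\<infinity>"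
  shows "\<exists>B. \<forall>p\<in>C. ereal B \<le> F p"
proof (rule ccontr)
  assume "\<not> (\<exists>B. \<forall>p\<in>C. ereal B \<le> F p)"
  then have "\<forall>n::nat. \<exists>p\<in>C. F p < ereal (- real n)" by (meson not_le)
  then obtain P where P: "\<And>n. P n \<in> C" "\<And>n. F (P n) < ereal (- real n)" by metis
  obtain l r where l: "l \<in> C" "strict_mono r" "(P \<circ> r) \<longlonglongrightarrow> l"
    using C(1)[unfolded compact_def, rule_format, of P] P(1) by blast
  have "F l \<le> liminf (\<lambda>n. F ((P \<circ> r) n))"
    using lsc[unfolded lsc_on_def, rule_format, of l "P \<circ> r"] C(2) l P(1) by (auto simp: subset_iff)
  also have "\<dots> \<le> ereal (- real N)" for N
  proof (rule Liminf_le)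
    show "sequentially \<noteq> bot" by simp
    have "F ((P \<circ> r) n) \<le> ereal (- real N)" if "n \<ge> N" for n
    proof -
      have "N \<le> r n" using seq_suble[OF l(2), of n] that by simp
      then have h1: "ereal (- real (r n)) \<le> ereal (- real N)" by simp
      have "F (P (r n)) \<le> ereal (- real (r n))" using P(2)[of "r n"] by (rule less_imp_le)
      then show ?thesis unfolding comp_def using h1 by (rule order.trans)
    qed
    then show "\<forall>\<^sub>F n in sequentially. F ((P \<circ> r) n) \<le> ereal (- real N)"
      by (auto simp: eventually_sequentially)
  qed
  finally have le: "F l \<le> ereal (- real N)" for N .
  show False
  proof (cases "F l")
    case (real x)
    obtain N :: nat where "real N > - x" using reals_Archimedean2 by blast
    then show False using le[of N] real by simp
  next
    case PInf then show False using le[of 0] by simp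
  next
    case MInf then show False using nm l by simp
  qed
qed


lemma L3_nbhd:
  fixes L :: "real \<Rightarrow> 'a::real_normed_vector \<Rightarrow> 'a \<Rightarrow> ereal"
  assumes L3: "\<forall>t\<in>{0..T}. \<forall>x v. \<forall>tn xn. (\<forall>n. tn n \<in> {0..T}) \<longrightarrow>
               tn \<longlonglongrightarrow> t \<longrightarrow> xn \<longlonglongrightarrow> x \<longrightarrow>
               (\<exists>vn. vn \<longlonglongrightarrow> v \<and> (\<lambda>n. L (tn n) (xn n) (vn n)) \<longlonglongrightarrow> L t x v)"
    and t: "t \<in> {0..T}" and Lc: "L t x v < ereal c" and dv: "dist v w < e" and e1: "e1 > 0"
  shows "\<exists>d>0. \<forall>t' x'. t' \<in> {0..T} \<longrightarrow> dist (t', x') (t, x) < d \<longrightarrow>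
           (\<exists>v'. dist v' v < e1 \<and> dist v' w < e \<and> L t' x' v' < ereal c)"
proof (rule ccontr)
  assume neg: "\<not> ?thesis"
  have "\<forall>n::nat. \<exists>t' x'. t' \<in> {0..T} \<and> dist (t', x') (t, x) < 1 / real (Suc n) \<and>
           (\<forall>v'. \<not> (dist v' v < e1 \<and> dist v' w < e \<and> L t' x' v' < ereal c))"
  proof (intro allI)
    fix n :: nat
    have "1 / real (Suc n) > 0" by simp
    then show "\<exists>t' x'. t' \<in> {0..T} \<and> dist (t', x') (t, x) < 1 / real (Suc n) \<and>
           (\<forall>v'. \<not> (dist v' v < e1 \<and> dist v' w < e \<and> L t' x' v' < ereal c))"
      using neg by blast
  qed
  then obtain tn xn where tn: "\<And>n. tn n \<in> {0..T}" and dn: "\<And>n. dist (tn n, xn n) (t, x) < 1 / real (Suc n)"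
    and nv: "\<And>n v'. \<not> (dist v' v < e1 \<and> dist v' w < e \<and> L (tn n) (xn n) v' < ereal c)"
    by (metis (no_types))
  have pl: "(\<lambda>n. (tn n, xn n)) \<longlonglongrightarrow> (t, x)"
  proof (rule tendsto_dist_iff[THEN iffD2], rule Lim_null_comparison)
    show "\<forall>\<^sub>F n in sequentially. norm (dist (tn n, xn n) (t, x)) \<le> 1 / real (Suc n)"
    proof (rule always_eventually, rule allI)
      fix n
      have "dist (tn n, xn n) (t, x) \<le> 1 / real (Suc n)" using dn[of n] by (rule less_imp_le)
      then show "norm (dist (tn n, xn n) (t, x)) \<le> 1 / real (Suc n)" by simp
    qed
    show "(\<lambda>n. 1 / real (Suc n)) \<longlonglongrightarrow> 0" by (rule LIMSEQ_Suc[OF lim_const_over_n])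
  qed
  have tl: "tn \<longlonglongrightarrow> t" using tendsto_fst[OF pl] by simp
  have xl: "xn \<longlonglongrightarrow> x" using tendsto_snd[OF pl] by simp
  obtain vn where vn: "vn \<longlonglongrightarrow> v" "(\<lambda>n. L (tn n) (xn n) (vn n)) \<longlonglongrightarrow> L t x v"
    using bspec[OF L3 t, THEN spec[where x=x], THEN spec[where x=v], THEN spec[where x=tn], THEN spec[where x=xn]] tn tl xl
    by blast
  have ev1: "\<forall>\<^sub>F n in sequentially. dist (vn n) v < e1"
    using vn(1) e1 by (rule tendstoD)
  have ev2: "\<forall>\<^sub>F n in sequentially. dist (vn n) w < e"
  proof -
    have "(\<lambda>n. dist (vn n) w) \<longlonglongrightarrow> dist v w" using vn(1) by (intro tendsto_intros)
    then show ?thesis using dv by (rule order_tendstoD)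
  qed
  have ev3: "\<forall>\<^sub>F n in sequentially. L (tn n) (xn n) (vn n) < ereal c"
    using vn(2) Lc by (rule order_tendstoD)
  have "\<forall>\<^sub>F n in sequentially. False"
    using ev1 ev2 ev3 by eventually_elim (use nv in blast)
  then show False by simp
qed


lemma ereal_quot_le:
  fixes X V :: ereal
  assumes V: "\<bar>V\<bar> \<noteq> \<infinity>" and X: "X \<le> V + ereal (\<tau> * k)" and \<tau>: "\<tau> > 0"
  shows "(X - V) / ereal \<tau> \<le> ereal k"
proof -
  obtain v where v: "V = ereal v" using V by (cases V) auto
  show ?thesis
  proof (cases X)
    case (real x)
    then have "x \<le> v + \<tau> * k" using X v by simp
    then have "(x - v) / \<tau> \<le> k" using \<tau> by (simp add: field_simps)
    then show ?thesis using real v \<tau> by simp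
  next
    case PInf then show ?thesis using X v by simp
  next
    case MInf then show ?thesis using v \<tau> by simp
  qed
qed

lemma subderiv_le_from:
  fixes \<phi> :: "'b::real_normed_vector \<Rightarrow> ereal"
  assumes fin: "\<bar>\<phi> z\<bar> \<noteq> \<infinity>"
    and H: "\<And>\<epsilon> r \<delta>. \<epsilon> > 0 \<Longrightarrow> r > 0 \<Longrightarrow> \<delta> > 0 \<Longrightarrow>
       \<exists>\<tau> u. 0 < \<tau> \<and> \<tau> < \<delta> \<and> dist u w < r \<and> \<phi> (z + \<tau> *\<^sub>R u) \<le> \<phi> z + ereal (\<tau> * (c + \<epsilon>))"
  shows "subderiv \<phi> z w \<le> ereal c"
proof (rule ereal_le_epsilon2)
  fix \<epsilon> :: real assume \<epsilon>: "\<epsilon> > 0"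
  show "subderiv \<phi> z w \<le> ereal c + ereal \<epsilon>"
    unfolding subderiv_def
  proof (rule Liminf_least)
    fix P assume "eventually P (at_right (0::real) \<times>\<^sub>F nhds w)"
    then obtain Pf Pg where Pf: "eventually Pf (at_right (0::real))" and Pg: "eventually Pg (nhds w)"
      and PP: "\<And>x y. Pf x \<Longrightarrow> Pg y \<Longrightarrow> P (x, y)"
      unfolding eventually_prod_filter by blast
    obtain b where b: "b > 0" "\<And>y. y > 0 \<Longrightarrow> y < b \<Longrightarrow> Pf y"
      using Pf unfolding eventually_at_right_field by auto
    obtain d where d: "d > 0" "\<And>y. dist y w < d \<Longrightarrow> Pg y"
      using Pg unfolding eventually_nhds_metric by auto
    obtain \<tau> u where tu: "0 < \<tau>" "\<tau> < b" "dist u w < d" "\<phi> (z + \<tau> *\<^sub>R u) \<le> \<phi> z + ereal (\<tau> * (c + \<epsilon>))"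
      using H[OF \<epsilon> d(1) b(1)] by blast
    have Pt: "P (\<tau>, u)" using PP b(2) d(2) tu by blast
    have "Inf ((\<lambda>(\<tau>, y). (\<phi> (z + \<tau> *\<^sub>R y) - \<phi> z) / ereal \<tau>) ` Collect P) \<le> (\<phi> (z + \<tau> *\<^sub>R u) - \<phi> z) / ereal \<tau>"
      using Pt by (intro Inf_lower) (auto intro!: image_eqI[of _ _ "(\<tau>, u)"])
    also have "\<dots> \<le> ereal (c + \<epsilon>)" by (rule ereal_quot_le[OF fin tu(4) tu(1)])
    finally show "Inf ((\<lambda>(\<tau>, y). (\<phi> (z + \<tau> *\<^sub>R y) - \<phi> z) / ereal \<tau>) ` Collect P) \<le> ereal c + ereal \<epsilon>" by simp
  qed
qed

lemma abs_cont_concat: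
  fixes y z :: "real \<Rightarrow> 'b::real_normed_vector"
  assumes ac1: "abs_cont_on a m y" and ac2: "abs_cont_on m b z" and am: "a \<le> m" "m \<le> b" and eq: "y m = z m"
  shows "abs_cont_on a b (\<lambda>t. if t \<le> m then y t else z t)"
  unfolding abs_cont_on_def
proof (intro allI impI)
  fix \<epsilon> :: real assume \<epsilon>: "\<epsilon> > 0"
  have e2: "\<epsilon>/2 > 0" using \<epsilon> by simp
  obtain \<delta>1 where \<delta>1: "\<delta>1 > 0" "\<forall>(n::nat) l r. (\<forall>k<n. a \<le> l k \<and> l k \<le> r k \<and> r k \<le> m) \<longrightarrow>
        (\<forall>i<n. \<forall>j<n. i \<noteq> j \<longrightarrow> {l i<..<r i} \<inter> {l j<..<r j} = {}) \<longrightarrow>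
        (\<Sum>k<n. r k - l k) < \<delta>1 \<longrightarrow> (\<Sum>k<n. norm (y (r k) - y (l k))) < \<epsilon>/2"
    using ac1[unfolded abs_cont_on_def, THEN spec[where x="\<epsilon>/2"], THEN mp, OF e2] by blast
  obtain \<delta>2 where \<delta>2: "\<delta>2 > 0" "\<forall>(n::nat) l r. (\<forall>k<n. m \<le> l k \<and> l k \<le> r k \<and> r k \<le> b) \<longrightarrow>
        (\<forall>i<n. \<forall>j<n. i \<noteq> j \<longrightarrow> {l i<..<r i} \<inter> {l j<..<r j} = {}) \<longrightarrow>
        (\<Sum>k<n. r k - l k) < \<delta>2 \<longrightarrow> (\<Sum>k<n. norm (z (r k) - z (l k))) < \<epsilon>/2"
    using ac2[unfolded abs_cont_on_def, THEN spec[where x="\<epsilon>/2"], THEN mp, OF e2] by blast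
  let ?w = "\<lambda>t. if t \<le> m then y t else z t"
  show "\<exists>\<delta>>0. \<forall>(n::nat) l r. (\<forall>k<n. a \<le> l k \<and> l k \<le> r k \<and> r k \<le> b) \<longrightarrow>
        (\<forall>i<n. \<forall>j<n. i \<noteq> j \<longrightarrow> {l i<..<r i} \<inter> {l j<..<r j} = {}) \<longrightarrow>
        (\<Sum>k<n. r k - l k) < \<delta> \<longrightarrow> (\<Sum>k<n. norm (?w (r k) - ?w (l k))) < \<epsilon>"
  proof (intro exI[of _ "min \<delta>1 \<delta>2"] conjI allI impI)
    show "min \<delta>1 \<delta>2 > 0" using \<delta>1 \<delta>2 by simp
    fix n :: nat and l r :: "nat \<Rightarrow> real" assume lr: "\<forall>k<n. a \<le> l k \<and> l k \<le> r k \<and> r k \<le> b" and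
      dj: "\<forall>i<n. \<forall>j<n. i \<noteq> j \<longrightarrow> {l i<..<r i} \<inter> {l j<..<r j} = {}" and s: "(\<Sum>k<n. r k - l k) < min \<delta>1 \<delta>2"
    define l1 where "l1 k = min (l k) m" for k
    define r1 where "r1 k = min (r k) m" for k
    define l2 where "l2 k = max (l k) m" for k
    define r2 where "r2 k = max (r k) m" for k
    have sub1: "{l1 k<..<r1 k} \<subseteq> {l k<..<r k}" if "l k \<le> r k" for k
      unfolding l1_def r1_def using that by auto
    have sub2: "{l2 k<..<r2 k} \<subseteq> {l k<..<r k}" if "l k \<le> r k" for k
      unfolding l2_def r2_def using that by auto
    have len1: "r1 k - l1 k \<le> r k - l k" if "l k \<le> r k" for k unfolding l1_def r1_def using that by auto
    have len2: "r2 k - l2 k \<le> r k - l k" if "l k \<le> r k" for k unfolding l2_def r2_def using that by auto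
    have S1: "(\<Sum>k<n. r1 k - l1 k) < \<delta>1"
    proof -
      have "(\<Sum>k<n. r1 k - l1 k) \<le> (\<Sum>k<n. r k - l k)" using lr len1 by (intro sum_mono) auto
      then show ?thesis using s by simp
    qed
    have S2: "(\<Sum>k<n. r2 k - l2 k) < \<delta>2"
    proof -
      have "(\<Sum>k<n. r2 k - l2 k) \<le> (\<Sum>k<n. r k - l k)" using lr len2 by (intro sum_mono) auto
      then show ?thesis using s by simp
    qed
    have c11: "\<And>k. k < n \<Longrightarrow> a \<le> l1 k \<and> l1 k \<le> r1 k \<and> r1 k \<le> m" using lr am unfolding l1_def r1_def by auto
    have c12: "\<And>i j. i < n \<Longrightarrow> j < n \<Longrightarrow> i \<noteq> j \<Longrightarrow> {l1 i<..<r1 i} \<inter> {l1 j<..<r1 j} = {}"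
    proof -
      fix i j assume ij: "i < n" "j < n" "i \<noteq> j"
      have "{l i<..<r i} \<inter> {l j<..<r j} = {}" using dj ij by blast
      moreover have "{l1 i<..<r1 i} \<subseteq> {l i<..<r i}" "{l1 j<..<r1 j} \<subseteq> {l j<..<r j}"
        using sub1 lr ij by auto
      ultimately show "{l1 i<..<r1 i} \<inter> {l1 j<..<r1 j} = {}" by blast
    qed
    have A1: "(\<Sum>k<n. norm (y (r1 k) - y (l1 k))) < \<epsilon>/2"
      by (rule \<delta>1(2)[rule_format, OF c11 c12 S1])
    have c21: "\<And>k. k < n \<Longrightarrow> m \<le> l2 k \<and> l2 k \<le> r2 k \<and> r2 k \<le> b" using lr am unfolding l2_def r2_def by auto
    have c22: "\<And>i j. i < n \<Longrightarrow> j < n \<Longrightarrow> i \<noteq> j \<Longrightarrow> {l2 i<..<r2 i} \<inter> {l2 j<..<r2 j} = {}"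
    proof -
      fix i j assume ij: "i < n" "j < n" "i \<noteq> j"
      have "{l i<..<r i} \<inter> {l j<..<r j} = {}" using dj ij by blast
      moreover have "{l2 i<..<r2 i} \<subseteq> {l i<..<r i}" "{l2 j<..<r2 j} \<subseteq> {l j<..<r j}"
        using sub2 lr ij by auto
      ultimately show "{l2 i<..<r2 i} \<inter> {l2 j<..<r2 j} = {}" by blast
    qed
    have A2: "(\<Sum>k<n. norm (z (r2 k) - z (l2 k))) < \<epsilon>/2"
      by (rule \<delta>2(2)[rule_format, OF c21 c22 S2])
    have "(\<Sum>k<n. norm (?w (r k) - ?w (l k))) \<le> (\<Sum>k<n. norm (y (r1 k) - y (l1 k)) + norm (z (r2 k) - z (l2 k)))"
    proof (rule sum_mono)
      fix k assume "k \<in> {..<n}"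
      then have lk: "l k \<le> r k" using lr by auto
      show "norm (?w (r k) - ?w (l k)) \<le> norm (y (r1 k) - y (l1 k)) + norm (z (r2 k) - z (l2 k))"
      proof (cases "r k \<le> m")
        case True then show ?thesis using lk unfolding l1_def r1_def l2_def r2_def by auto
      next
        case False
        note rk = False
        show ?thesis
        proof (cases "l k \<le> m")
          case True
          have "?w (r k) - ?w (l k) = (y m - y (l k)) + (z (r k) - z m)" using rk True eq by simp
          then have "norm (?w (r k) - ?w (l k)) \<le> norm (y m - y (l k)) + norm (z (r k) - z m)"
            by (metis norm_triangle_ineq)
          moreover have "r1 k = m" "l1 k = l k" "r2 k = r k" "l2 k = m"
            using rk True unfolding l1_def r1_def l2_def r2_def by auto
          ultimately show ?thesis by simp
        next
          case False then show ?thesis using rk unfolding l1_def r1_def l2_def r2_def by auto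
        qed
      qed
    qed
    also have "\<dots> = (\<Sum>k<n. norm (y (r1 k) - y (l1 k))) + (\<Sum>k<n. norm (z (r2 k) - z (l2 k)))"
      by (rule sum.distrib)
    also have "\<dots> < \<epsilon>/2 + \<epsilon>/2" using A1 A2 by simp
    finally show "(\<Sum>k<n. norm (?w (r k) - ?w (l k))) < \<epsilon>" by simp
  qed
qed

lemma peano_backward:
  fixes f :: "real \<times> 'a::euclidean_space \<Rightarrow> 'a"
  assumes ab: "a < b" and cf: "continuous_on ({a..b} \<times> cball x0 R) f"
    and bd: "\<forall>p\<in>{a..b} \<times> cball x0 R. norm (f p) \<le> M" and MR: "M * (b - a) \<le> R" and M0: "0 \<le> M"
  shows "\<exists>y. y b = x0 \<and> (\<forall>t\<in>{a..b}. y t \<in> cball x0 R \<and>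
              (y has_vector_derivative f (t, y t)) (at t within {a..b}))"
proof -
  define g where "g p = - f (a + b - fst p, snd p)" for p
  have im: "(\<lambda>p. (a + b - fst p, snd p)) ` ({a..b} \<times> cball x0 R) \<subseteq> {a..b} \<times> cball x0 R" by auto
  have cg: "continuous_on ({a..b} \<times> cball x0 R) g"
    unfolding g_def
    by (intro continuous_intros continuous_on_compose2[OF cf _ im]) 
  have bg: "\<forall>p\<in>{a..b} \<times> cball x0 R. norm (g p) \<le> M"
    unfolding g_def using bd im by auto
  obtain z where z0: "z a = x0" and z: "\<forall>t\<in>{a..b}. z t \<in> cball x0 R \<and> (z has_vector_derivative g (t, z t)) (at t within {a..b})"
    using peano_forward[OF ab cg bg MR M0] by blast
  define y where "y t = z (a + b - t)" for t
  show ?thesis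
  proof (intro exI[of _ y] conjI ballI)
    show "y b = x0" using z0 by (simp add: y_def)
    fix t assume t: "t \<in> {a..b}"
    have t': "a + b - t \<in> {a..b}" using t by auto
    show "y t \<in> cball x0 R" using z t' by (simp add: y_def)
    have d1: "((\<lambda>t. a + b - t) has_vector_derivative -1) (at t within {a..b})"
      by (auto intro!: derivative_eq_intros)
    have imI: "(\<lambda>t. a + b - t) ` {a..b} = {a..b}"
    proof
      show "(\<lambda>t. a + b - t) ` {a..b} \<subseteq> {a..b}" by auto
      show "{a..b} \<subseteq> (\<lambda>t. a + b - t) ` {a..b}"
      proof
        fix s assume "s \<in> {a..b}"
        then show "s \<in> (\<lambda>t. a + b - t) ` {a..b}" by (intro image_eqI[of _ _ "a + b - s"]) auto
      qed
    qed
    have d2: "(z has_vector_derivative g (a + b - t, z (a + b - t))) (at (a + b - t) within (\<lambda>t. a + b - t) ` {a..b})"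
      unfolding imI using z t' by blast
    have "((z \<circ> (\<lambda>t. a + b - t)) has_vector_derivative (-1) *\<^sub>R g (a + b - t, z (a + b - t))) (at t within {a..b})"
      by (rule vector_diff_chain_within[OF d1 d2])
    moreover have "(-1) *\<^sub>R g (a + b - t, z (a + b - t)) = f (t, y t)" by (simp add: g_def y_def)
    moreover have "z \<circ> (\<lambda>t. a + b - t) = y" by (rule ext) (simp add: y_def)
    ultimately show "(y has_vector_derivative f (t, y t)) (at t within {a..b})" by simp
  qed
qed

lemma lipschitz_abs_cont:
  fixes x :: "real \<Rightarrow> 'b::real_normed_vector"
  assumes lip: "\<And>s t. s \<in> {a..b} \<Longrightarrow> t \<in> {a..b} \<Longrightarrow> norm (x t - x s) \<le> M * \<bar>t - s\<bar>" and M0: "0 \<le> M"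
  shows "abs_cont_on a b x"
  unfolding abs_cont_on_def
proof (intro allI impI)
  fix \<epsilon> :: real assume \<epsilon>: "\<epsilon> > 0"
  show "\<exists>\<delta>>0. \<forall>(n::nat) l r. (\<forall>k<n. a \<le> l k \<and> l k \<le> r k \<and> r k \<le> b) \<longrightarrow>
        (\<forall>i<n. \<forall>j<n. i \<noteq> j \<longrightarrow> {l i<..<r i} \<inter> {l j<..<r j} = {}) \<longrightarrow>
        (\<Sum>k<n. r k - l k) < \<delta> \<longrightarrow> (\<Sum>k<n. norm (x (r k) - x (l k))) < \<epsilon>"
  proof (intro exI[of _ "\<epsilon> / (M + 1)"] conjI allI impI)
    show "\<epsilon> / (M + 1) > 0" using \<epsilon> M0 by simp
    fix n :: nat and l r :: "nat \<Rightarrow> real" assume lr: "\<forall>k<n. a \<le> l k \<and> l k \<le> r k \<and> r k \<le> b" and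
      "\<forall>i<n. \<forall>j<n. i \<noteq> j \<longrightarrow> {l i<..<r i} \<inter> {l j<..<r j} = {}" and s: "(\<Sum>k<n. r k - l k) < \<epsilon> / (M + 1)"
    have "(\<Sum>k<n. norm (x (r k) - x (l k))) \<le> (\<Sum>k<n. M * (r k - l k))"
    proof (rule sum_mono)
      fix k assume "k \<in> {..<n}"
      then have "a \<le> l k \<and> l k \<le> r k \<and> r k \<le> b" using lr by auto
      then show "norm (x (r k) - x (l k)) \<le> M * (r k - l k)" using lip[of "l k" "r k"] by auto
    qed
    also have "\<dots> = M * (\<Sum>k<n. r k - l k)" by (simp add: sum_distrib_left)
    also have "\<dots> \<le> M * (\<epsilon> / (M + 1))" using s M0 by (intro mult_left_mono) auto
    also have "\<dots> < \<epsilon>" using M0 \<epsilon> by (simp add: field_simps)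
    finally show "(\<Sum>k<n. norm (x (r k) - x (l k))) < \<epsilon>" .
  qed
qed

lemma vd_bound:
  fixes \<phi> :: "real \<Rightarrow> 'b::real_normed_vector"
  assumes d: "\<And>t. t \<in> {a..b} \<Longrightarrow> (\<phi> has_vector_derivative \<phi>' t) (at t within {a..b})"
    and B: "\<And>t. t \<in> {a..b} \<Longrightarrow> norm (\<phi>' t) \<le> B" and s: "s \<in> {a..b}" and t: "t \<in> {a..b}"
  shows "norm (\<phi> t - \<phi> s) \<le> B * \<bar>t - s\<bar>"
proof -
  have "norm (\<phi> t - \<phi> s) \<le> B * norm (t - s)"
  proof (rule differentiable_bound[of "{a..b}" \<phi> "\<lambda>t h. h *\<^sub>R \<phi>' t" B t s])
    show "convex {a..b}" by simp
    show "(\<phi> has_derivative (\<lambda>h. h *\<^sub>R \<phi>' x)) (at x within {a..b})" if "x \<in> {a..b}" for x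
      using d[OF that] by (simp add: has_vector_derivative_def)
    show "onorm (\<lambda>h. h *\<^sub>R \<phi>' x) \<le> B" if "x \<in> {a..b}" for x
    proof -
      have "onorm (\<lambda>h. h *\<^sub>R \<phi>' x) = onorm (\<lambda>h::real. h) * norm (\<phi>' x)"
        by (rule onorm_scaleR_left) (rule bounded_linear_ident)
      then show ?thesis using B[OF that] by (simp add: onorm_id)
    qed
  qed (use s t in auto)
  then show ?thesis by simp
qed

lemma selection_step:
  fixes L :: "real \<Rightarrow> 'a::euclidean_space \<Rightarrow> 'a \<Rightarrow> ereal"
  assumes L1: "lsc_on {(t, x, v). t \<in> {0..T}} (\<lambda>(t, x, v). L t x v)"
    and L2: "\<forall>t\<in>{0..T}. \<forall>x. ereal_convex (L t x) \<and> proper_fn (L t x)"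
    and L3: "\<forall>t\<in>{0..T}. \<forall>x v. \<forall>tn xn. (\<forall>n. tn n \<in> {0..T}) \<longrightarrow>
               tn \<longlonglongrightarrow> t \<longrightarrow> xn \<longlonglongrightarrow> x \<longrightarrow>
               (\<exists>vn. vn \<longlonglongrightarrow> v \<and> (\<lambda>n. L (tn n) (xn n) (vn n)) \<longlonglongrightarrow> L t x v)"
    and t0: "t0 \<in> {0<..T}" and L0: "L t0 x0 v0 = ereal L0" and e: "e > 0"
  shows "\<exists>\<rho> f. 0 < \<rho> \<and> \<rho> \<le> t0 \<and> continuous_on ({t0 - \<rho>..t0} \<times> cball x0 \<rho>) f \<and>
          (\<forall>p\<in>{t0 - \<rho>..t0} \<times> cball x0 \<rho>. dist (f p) v0 \<le> e \<and> L (fst p) (snd p) (f p) \<le> ereal (L0 + e))"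
proof -
  define a' where "a' = L0 + e"
  define \<Phi> where "\<Phi> p = {v. dist v v0 < e \<and> L (fst p) (snd p) v < ereal a'}" for p
  have t0T: "t0 \<in> {0..T}" using t0 by auto
  obtain d0 where d0: "d0 > 0" "\<forall>t' x'. t' \<in> {0..T} \<longrightarrow> dist (t', x') (t0, x0) < d0 \<longrightarrow>
           (\<exists>v'. dist v' v0 < 1 \<and> dist v' v0 < e \<and> L t' x' v' < ereal a')"
    using L3_nbhd[OF L3 t0T, of x0 v0 a' v0 e 1] L0 e unfolding a'_def by auto
  define \<rho> where "\<rho> = min (d0/3) t0"
  have \<rho>: "\<rho> > 0" "\<rho> \<le> t0" using d0 t0 by (auto simp: \<rho>_def)
  define K where "K = {t0 - \<rho>..t0} \<times> cball x0 \<rho>"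
  have Kt: "fst p \<in> {0..T}" if "p \<in> K" for p using that \<rho> t0 unfolding K_def by auto
  have ne: "\<forall>p\<in>K. \<Phi> p \<noteq> {}"
  proof
    fix p assume p: "p \<in> K"
    obtain t x where ptx: "p = (t, x)" by (cases p)
    have "dist (t, x) (t0, x0) \<le> dist t t0 + dist x x0" by (rule dist_pair_le)
    also have "\<dots> \<le> \<rho> + \<rho>" using p unfolding K_def ptx by (auto simp: dist_real_def dist_commute)
    also have "\<dots> < d0" using d0 unfolding \<rho>_def by auto
    finally have "dist (t, x) (t0, x0) < d0" .
    then obtain v' where "dist v' v0 < e" "L t x v' < ereal a'" using d0(2) Kt[OF p] ptx by auto
    then show "\<Phi> p \<noteq> {}" unfolding \<Phi>_def ptx by auto
  qed
  have cv: "\<forall>p\<in>K. convex (\<Phi> p)"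
  proof
    fix p assume p: "p \<in> K"
    obtain t x where ptx: "p = (t, x)" by (cases p)
    have tT: "t \<in> {0..T}" using Kt[OF p] ptx by simp
    have cvx: "ereal_convex (L t x)" and pr: "proper_fn (L t x)" using L2 tT by auto
    show "convex (\<Phi> p)" unfolding convex_def
    proof (intro ballI allI impI)
      fix v1 v2 and u w :: real assume v1: "v1 \<in> \<Phi> p" and v2: "v2 \<in> \<Phi> p" and uw: "0 \<le> u" "0 \<le> w" "u + w = 1"
      have w: "w = 1 - u" using uw by simp
      have d1: "dist v1 v0 < e" "L t x v1 < ereal a'" and d2: "dist v2 v0 < e" "L t x v2 < ereal a'"
        using v1 v2 unfolding \<Phi>_def ptx by auto
      obtain l1 where l1: "L t x v1 = ereal l1" using d1(2) pr unfolding proper_fn_def by (cases "L t x v1") auto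
      obtain l2 where l2: "L t x v2 = ereal l2" using d2(2) pr unfolding proper_fn_def by (cases "L t x v2") auto
      have "L t x (u *\<^sub>R v1 + (1 - u) *\<^sub>R v2) \<le> ereal u * L t x v1 + ereal (1 - u) * L t x v2"
        using cvx uw unfolding ereal_convex_def w by auto
      also have "\<dots> = ereal (u * l1 + (1 - u) * l2)" using l1 l2 by simp
      also have "\<dots> < ereal a'"
      proof -
        have "l1 < a'" "l2 < a'" using d1 d2 l1 l2 by auto
        have "u * l1 + (1 - u) * l2 < a'"
        proof (cases "u = 0")
          case True then show ?thesis using \<open>l2 < a'\<close> by simp
        next
          case False
          then have "u * l1 < u * a'" using uw \<open>l1 < a'\<close> by simp
          moreover have "(1 - u) * l2 \<le> (1 - u) * a'" using uw \<open>l2 < a'\<close> by (intro mult_left_mono) auto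
          ultimately show ?thesis by (simp add: algebra_simps)
        qed
        then show ?thesis by simp
      qed
      finally have Lc: "L t x (u *\<^sub>R v1 + w *\<^sub>R v2) < ereal a'" unfolding w .
      have "u *\<^sub>R v1 + w *\<^sub>R v2 \<in> ball v0 e"
        using convex_ball[of v0 e, unfolded convex_def] d1 d2 uw by (auto simp: dist_commute)
      then show "u *\<^sub>R v1 + w *\<^sub>R v2 \<in> \<Phi> p" using Lc unfolding \<Phi>_def ptx by (auto simp: dist_commute)
    qed
  qed
  have lhc: "lhc_on K \<Phi>"
    unfolding lhc_on_def
  proof (intro ballI allI impI)
    fix p v and e1 :: real assume p: "p \<in> K" and v: "v \<in> \<Phi> p" and e1: "e1 > 0"
    obtain t x where ptx: "p = (t, x)" by (cases p)
    have tT: "t \<in> {0..T}" using Kt[OF p] ptx by simp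
    have vv: "L t x v < ereal a'" "dist v v0 < e" using v unfolding \<Phi>_def ptx by auto
    obtain d where d: "d > 0" "\<forall>t' x'. t' \<in> {0..T} \<longrightarrow> dist (t', x') (t, x) < d \<longrightarrow>
           (\<exists>v'. dist v' v < e1 \<and> dist v' v0 < e \<and> L t' x' v' < ereal a')"
      using L3_nbhd[OF L3 tT vv e1] by blast
    show "\<exists>d>0. \<forall>q\<in>K. dist q p < d \<longrightarrow> (\<exists>w\<in>\<Phi> q. dist w v < e1)"
    proof (intro exI[of _ d] conjI ballI impI d(1))
      fix q assume q: "q \<in> K" "dist q p < d"
      obtain t' x' where qtx: "q = (t', x')" by (cases q)
      have "t' \<in> {0..T}" using Kt[OF q(1)] qtx by simp
      then obtain v' where "dist v' v < e1" "dist v' v0 < e" "L t' x' v' < ereal a'"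
        using d(2) q(2) unfolding qtx ptx by blast
      then show "\<exists>w\<in>\<Phi> q. dist w v < e1" unfolding \<Phi>_def qtx by auto
    qed
  qed
  have cK: "compact K" unfolding K_def by (intro compact_Times compact_Icc compact_cball)
  obtain f where cf: "continuous_on K f" and fcl: "\<forall>p\<in>K. f p \<in> closure (\<Phi> p)"
    using michael_selection[OF cK ne cv lhc] by blast
  have fprop: "dist (f p) v0 \<le> e \<and> L (fst p) (snd p) (f p) \<le> ereal (L0 + e)" if p: "p \<in> K" for p
  proof
    have "\<Phi> p \<subseteq> ball v0 e" unfolding \<Phi>_def by (auto simp: dist_commute)
    then have "closure (\<Phi> p) \<subseteq> cball v0 e" using closure_mono closure_ball e by metis
    then show "dist (f p) v0 \<le> e" using fcl p by (auto simp: dist_commute)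
    obtain X where X: "\<And>n. X n \<in> \<Phi> p" "X \<longlonglongrightarrow> f p" using fcl p closure_sequential by metis
    obtain t x where ptx: "p = (t, x)" by (cases p)
    have tT: "t \<in> {0..T}" using Kt[OF p] ptx by simp
    have "(\<lambda>n. (t, x, X n)) \<longlonglongrightarrow> (t, x, f p)" using X(2) by (intro tendsto_intros)
    then have "(\<lambda>(t, x, v). L t x v) (t, x, f p) \<le> liminf (\<lambda>n. (\<lambda>(t, x, v). L t x v) (t, x, X n))"
      using L1[unfolded lsc_on_def, rule_format, of "(t, x, f p)" "\<lambda>n. (t, x, X n)"] tT by auto
    then have "L t x (f p) \<le> liminf (\<lambda>n. L t x (X n))" by simp
    also have "\<dots> \<le> ereal a'"
    proof (rule Liminf_le)
      show "\<forall>\<^sub>F n in sequentially. L t x (X n) \<le> ereal a'"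
        using X(1) unfolding \<Phi>_def ptx by (auto intro!: always_eventually less_imp_le)
    qed simp
    finally show "L (fst p) (snd p) (f p) \<le> ereal (L0 + e)" unfolding ptx a'_def by simp
  qed
  show ?thesis using \<rho> cf fprop unfolding K_def by blast
qed

lemma trajectory:
  fixes f :: "real \<times> 'a::euclidean_space \<Rightarrow> 'a"
  assumes cf: "continuous_on ({t0 - \<rho>..t0} \<times> cball x0 \<rho>) f"
   and fb: "\<forall>p\<in>{t0 - \<rho>..t0} \<times> cball x0 \<rho>. dist (f p) v0 \<le> e" and e: "0 < e"
   and \<tau>: "0 < \<tau>" "\<tau> \<le> \<rho>" "(norm v0 + e) * \<tau> \<le> \<rho>"
  shows "\<exists>y. y t0 = x0 \<and> (\<forall>t\<in>{t0-\<tau>..t0}. y t \<in> cball x0 \<rho> \<and> (y has_vector_derivative f (t, y t)) (at t within {t0-\<tau>..t0}))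
        \<and> (\<forall>s\<in>{t0-\<tau>..t0}. \<forall>t\<in>{t0-\<tau>..t0}. norm (y t - y s) \<le> (norm v0 + e) * \<bar>t - s\<bar>)
        \<and> norm (x0 - y (t0 - \<tau>) - \<tau> *\<^sub>R v0) \<le> e * \<tau>"
proof -
  define M where "M = norm v0 + e"
  have M0: "0 \<le> M" using e by (simp add: M_def)
  have sub: "{t0 - \<tau>..t0} \<times> cball x0 \<rho> \<subseteq> {t0 - \<rho>..t0} \<times> cball x0 \<rho>" using \<tau> by auto
  have cf': "continuous_on ({t0 - \<tau>..t0} \<times> cball x0 \<rho>) f" by (rule continuous_on_subset[OF cf sub])
  have fbM: "norm (f p) \<le> M" if "p \<in> {t0 - \<rho>..t0} \<times> cball x0 \<rho>" for p
  proof -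
    have "norm (f p) \<le> norm v0 + norm (f p - v0)" by (metis add.commute diff_add_cancel norm_triangle_ineq)
    also have "\<dots> \<le> norm v0 + e" using bspec[OF fb that] by (simp add: dist_norm)
    finally show ?thesis by (simp add: M_def)
  qed
  have bd: "\<forall>p\<in>{t0 - \<tau>..t0} \<times> cball x0 \<rho>. norm (f p) \<le> M" using fbM sub by blast
  have MR: "M * (t0 - (t0 - \<tau>)) \<le> \<rho>" using \<tau> by (simp add: M_def)
  obtain y where y0: "y t0 = x0" and y: "\<forall>t\<in>{t0-\<tau>..t0}. y t \<in> cball x0 \<rho> \<and> (y has_vector_derivative f (t, y t)) (at t within {t0-\<tau>..t0})"
    using peano_backward[of "t0 - \<tau>" t0 x0 \<rho> f M] \<tau>(1) cf' bd MR M0 by auto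
  have inK: "(t, y t) \<in> {t0 - \<rho>..t0} \<times> cball x0 \<rho>" if "t \<in> {t0-\<tau>..t0}" for t
    using that y \<tau> by auto
  have lip: "norm (y t - y s) \<le> M * \<bar>t - s\<bar>" if "s \<in> {t0-\<tau>..t0}" "t \<in> {t0-\<tau>..t0}" for s t
    by (rule vd_bound[of "t0 - \<tau>" t0 y "\<lambda>t. f (t, y t)" M s t]) (use y fbM inK that in auto)
  have endp: "norm ((y t0 - t0 *\<^sub>R v0) - (y (t0 - \<tau>) - (t0 - \<tau>) *\<^sub>R v0)) \<le> e * \<bar>t0 - (t0 - \<tau>)\<bar>"
  proof (rule vd_bound[of "t0 - \<tau>" t0 "\<lambda>t. y t - t *\<^sub>R v0" "\<lambda>t. f (t, y t) - v0" e])
    fix t assume t: "t \<in> {t0 - \<tau>..t0}"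
    show "((\<lambda>t. y t - t *\<^sub>R v0) has_vector_derivative f (t, y t) - v0) (at t within {t0 - \<tau>..t0})"
      using y t by (auto intro!: derivative_eq_intros)
    show "norm (f (t, y t) - v0) \<le> e" using fb inK[OF t] by (simp add: dist_norm)
  qed (use \<tau> in auto)
  have "x0 - y (t0 - \<tau>) - \<tau> *\<^sub>R v0 = (y t0 - t0 *\<^sub>R v0) - (y (t0 - \<tau>) - (t0 - \<tau>) *\<^sub>R v0)"
    using y0 by (simp add: algebra_simps)
  moreover have "e * \<bar>t0 - (t0 - \<tau>)\<bar> = e * \<tau>" using \<tau> by simp
  ultimately have "norm (x0 - y (t0 - \<tau>) - \<tau> *\<^sub>R v0) \<le> e * \<tau>" using endp by metis
  then show ?thesis using y0 y lip unfolding M_def by blast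
qed

theorem theorem5p5:
  fixes T :: real
    and L :: "real \<Rightarrow> 'a::euclidean_space \<Rightarrow> 'a \<Rightarrow> ereal"
    and g :: "'a \<Rightarrow> ereal"
    and c :: "real \<Rightarrow> real"
    and \<N> :: "real set"
  assumes L1: "lsc_on {(t, x, v). t \<in> {0..T}} (\<lambda>(t, x, v). L t x v)"
    and L2: "\<forall>t\<in>{0..T}. \<forall>x. ereal_convex (L t x) \<and> proper_fn (L t x)"
    and L3: "\<forall>t\<in>{0..T}. \<forall>x v. \<forall>tn xn. (\<forall>n. tn n \<in> {0..T}) \<longrightarrow>
               tn \<longlonglongrightarrow> t \<longrightarrow> xn \<longlonglongrightarrow> x \<longrightarrow>
               (\<exists>vn. vn \<longlonglongrightarrow> v \<and> (\<lambda>n. L (tn n) (xn n) (vn n)) \<longlonglongrightarrow> L t x v)"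
    and L4: "\<forall>R\<ge>0. \<exists>CR\<ge>0. \<forall>t\<in>{0..T}. \<forall>x v. norm x \<le> R \<longrightarrow> norm v > CR \<longrightarrow> L t x v = \<infinity>"
    and L5_int: "c integrable_on {0..T}" and L5_nonneg: "\<forall>t\<in>{0..T}. 0 \<le> c t"
    and L5_null: "\<N> \<in> null_sets lebesgue"
    and L5: "\<forall>t\<in>{0..T} - \<N>. \<forall>x v. norm v > c t * (1 + norm x) \<longrightarrow> L t x v = \<infinity>"
    and g_proper: "proper_fn g"
    and g_lsc: "lsc_on UNIV g"
    and t0: "t0 \<in> {0<..T}"
    and domV: "\<bar>value_fn T L g (t0, x0)\<bar> \<noteq> \<infinity>"
    and domL: "\<bar>L t0 x0 v0\<bar> \<noteq> \<infinity>"
  shows "subderiv (value_fn T L g) (t0, x0) (-1, -v0) \<le> L t0 x0 v0"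
proof -
  define V where "V = value_fn T L g"
  obtain V0 where V0: "V (t0, x0) = ereal V0" using domV unfolding V_def by (cases "value_fn T L g (t0, x0)") auto
  obtain L0 where L0: "L t0 x0 v0 = ereal L0" using domL by (cases "L t0 x0 v0") auto
  have t0p: "0 < t0" "t0 \<le> T" using t0 by auto
  have gnm: "g z \<noteq> -\<infinity>" for z using g_proper unfolding proper_fn_def by auto
  have key: "\<exists>\<tau> u. 0 < \<tau> \<and> \<tau> < \<delta> \<and> dist u v0 < r \<and> V (t0 - \<tau>, x0 - \<tau> *\<^sub>R u) \<le> V (t0, x0) + ereal (\<tau> * (L0 + \<epsilon>))"
    if \<epsilon>: "\<epsilon> > 0" and r: "r > 0" and \<delta>: "\<delta> > 0" for \<epsilon> r \<delta>
  proof -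
    define e where "e = min (r/2) (\<epsilon>/2)"
    have e: "e > 0" "e < r" "e \<le> \<epsilon>/2" using \<epsilon> r by (auto simp: e_def)
    obtain \<rho> f where \<rho>: "0 < \<rho>" "\<rho> \<le> t0" and cf: "continuous_on ({t0 - \<rho>..t0} \<times> cball x0 \<rho>) f"
      and fp: "\<forall>p\<in>{t0 - \<rho>..t0} \<times> cball x0 \<rho>. dist (f p) v0 \<le> e \<and> L (fst p) (snd p) (f p) \<le> ereal (L0 + e)"
      using selection_step[OF L1 L2 L3 t0 L0 e(1)] by blast
    define M where "M = norm v0 + e"
    have M: "M \<ge> 0" using e by (simp add: M_def)
    define \<tau> where "\<tau> = min (\<delta>/2) (\<rho> / (M + 1))"
    have \<tau>1: "0 < \<tau>" "\<tau> < \<delta>" using \<delta> \<rho> M by (auto simp: \<tau>_def)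
    have \<tau>2: "\<tau> \<le> \<rho> / (M + 1)" by (simp add: \<tau>_def)
    have \<tau>3: "\<rho> / (M + 1) \<le> \<rho>" using \<rho> M by (simp add: field_simps)
    have \<tau>4: "M * \<tau> \<le> \<rho>"
    proof -
      have "M * \<tau> \<le> M * (\<rho> / (M + 1))" using \<tau>2 M by (rule mult_left_mono)
      also have "\<dots> \<le> \<rho>" using M \<rho> by (simp add: field_simps)
      finally show ?thesis .
    qed
    have \<tau>5: "\<tau> \<le> \<rho>" using \<tau>2 \<tau>3 by linarith
    have fb: "\<forall>p\<in>{t0 - \<rho>..t0} \<times> cball x0 \<rho>. dist (f p) v0 \<le> e" using fp by blast
    obtain y where y0: "y t0 = x0" and y: "\<forall>t\<in>{t0-\<tau>..t0}. y t \<in> cball x0 \<rho> \<and> (y has_vector_derivative f (t, y t)) (at t within {t0-\<tau>..t0})"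
      and lip: "\<forall>s\<in>{t0-\<tau>..t0}. \<forall>t\<in>{t0-\<tau>..t0}. norm (y t - y s) \<le> M * \<bar>t - s\<bar>"
      and endp: "norm (x0 - y (t0 - \<tau>) - \<tau> *\<^sub>R v0) \<le> e * \<tau>"
      using trajectory[OF cf fb e(1) \<tau>1(1) \<tau>5] \<tau>4 unfolding M_def by (auto simp: mult.commute)
    define ts where "ts = t0 - \<tau>"
    have ts: "0 \<le> ts" "ts < t0" "ts < T" "t0 - ts = \<tau>" using \<tau>1 \<tau>5 \<rho> t0p by (auto simp: ts_def)
    define u where "u = (1/\<tau>) *\<^sub>R (x0 - y ts)"
    have yts: "y ts = x0 - \<tau> *\<^sub>R u" using \<tau>1 by (simp add: u_def)
    have du: "dist u v0 < r"
    proof -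
      have "u - v0 = (1/\<tau>) *\<^sub>R (x0 - y ts - \<tau> *\<^sub>R v0)" using \<tau>1 by (simp add: u_def algebra_simps)
      then have "norm (u - v0) = (1/\<tau>) * norm (x0 - y ts - \<tau> *\<^sub>R v0)" using \<tau>1 by simp
      also have "\<dots> \<le> (1/\<tau>) * (e * \<tau>)" using endp \<tau>1 unfolding ts_def by (intro mult_left_mono) auto
      also have "\<dots> = e" using \<tau>1 by simp
      finally show ?thesis using e by (simp add: dist_norm)
    qed
    define hy where "hy t = L t (y t) (f (t, y t))" for t
    have tsI: "{ts..t0} = {t0-\<tau>..t0}" by (simp add: ts_def)
    have inK: "(t, y t) \<in> {t0 - \<rho>..t0} \<times> cball x0 \<rho>" if "t \<in> {ts..t0}" for t
      using that y \<tau>5 unfolding tsI by auto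
    have hyu: "hy t \<le> ereal (L0 + e)" if "t \<in> {ts..t0}" for t
      using fp inK[OF that] unfolding hy_def by auto
    define C where "C = {ts..t0} \<times> (cball x0 \<rho> \<times> cball v0 e)"
    have cC: "compact C" unfolding C_def by (intro compact_Times compact_Icc compact_cball)
    have CS: "C \<subseteq> {(t, x, v). t \<in> {0..T}}" unfolding C_def using ts t0p by auto
    have Cnm: "\<forall>p\<in>C. (\<lambda>(t, x, v). L t x v) p \<noteq> -\<infinity>"
    proof
      fix p assume "p \<in> C"
      then obtain t x v where p: "p = (t, x, v)" "t \<in> {0..T}" using CS by auto
      then have "proper_fn (L t x)" using L2 by auto
      then show "(\<lambda>(t, x, v). L t x v) p \<noteq> -\<infinity>" unfolding p proper_fn_def by auto
    qed
    obtain B where B: "\<forall>p\<in>C. ereal B \<le> (\<lambda>(t, x, v). L t x v) p"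
      using lsc_bounded_below[OF L1 cC CS Cnm] by blast
    have hyl: "ereal B \<le> hy t" if t: "t \<in> {ts..t0}" for t
    proof -
      have "dist (f (t, y t)) v0 \<le> e" using fp inK[OF t] by auto
      then have "(t, y t, f (t, y t)) \<in> C" using inK[OF t] t unfolding C_def by (auto simp: dist_commute)
      then show ?thesis using B unfolding hy_def by auto
    qed
    have short: "ext_integral {ts..t0} H \<le> ereal (\<tau> * (L0 + e))" if H: "\<And>t. t \<in> {ts<..<t0} \<Longrightarrow> H t = hy t" for H
    proof -
      have "ext_integral {ts..t0} H = ext_integral {ts..t0} hy" by (rule ext_integral_cong_Ioo) (use H in auto)
      also have "\<dots> \<le> ereal ((L0 + e) * (t0 - ts))"
        by (rule ext_integral_bound[of ts t0 B hy]) (use ts hyl hyu in auto)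
      finally show ?thesis using ts by (simp add: mult.commute)
    qed
    have ydt: "(y has_vector_derivative f (t, y t)) (at t)" if t: "t \<in> {ts<..<t0}" for t
    proof -
      have "t \<in> {t0-\<tau>..t0}" using t by (auto simp: ts_def)
      then have "(y has_vector_derivative f (t, y t)) (at t within {ts..t0})" using y unfolding tsI by blast
      moreover have "at t within {ts..t0} = at t" using t by (intro at_within_interior) auto
      ultimately show ?thesis by simp
    qed
    have acy: "abs_cont_on ts t0 y"
      by (rule lipschitz_abs_cont[OF _ M]) (use lip in \<open>auto simp: tsI\<close>)
    have Vts: "V (ts, y ts) = (INF x\<in>{x. abs_cont_on ts T x \<and> x ts = y ts}.
          g (x T) + ext_integral {ts..T} (\<lambda>t. L t (x t) (vector_derivative x (at t within {ts..T}))))"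
      unfolding V_def value_fn_def using ts by auto
    have Vbound: "V (ts, y ts) \<le> V (t0, x0) + ereal (\<tau> * (L0 + e + \<epsilon>/2))"
    proof (cases "t0 = T")
      case True
      have "V (ts, y ts) \<le> g (y T) + ext_integral {ts..T} (\<lambda>t. L t (y t) (vector_derivative y (at t within {ts..T})))"
        unfolding Vts by (rule INF_lower) (use acy True in auto)
      also have "ext_integral {ts..T} (\<lambda>t. L t (y t) (vector_derivative y (at t within {ts..T}))) \<le> ereal (\<tau> * (L0 + e))"
        unfolding True[symmetric]
      proof (rule short)
        fix t assume t: "t \<in> {ts<..<t0}"
        have "vector_derivative y (at t within {ts..t0}) = f (t, y t)"
          using vector_derivative_within_cbox[of ts t0 t y "f (t, y t)"] ts t ydt[OF t]
          by (auto simp: cbox_interval intro: has_vector_derivative_at_within)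
        then show "L t (y t) (vector_derivative y (at t within {ts..t0})) = hy t" by (simp add: hy_def)
      qed
      then have "g (y T) + ext_integral {ts..T} (\<lambda>t. L t (y t) (vector_derivative y (at t within {ts..T}))) \<le> g (y T) + ereal (\<tau> * (L0 + e))"
        by (rule add_left_mono)
      also have "g (y T) = V (t0, x0)" using True y0 unfolding V_def value_fn_def by simp
      also have "V (t0, x0) + ereal (\<tau> * (L0 + e)) \<le> V (t0, x0) + ereal (\<tau> * (L0 + e + \<epsilon>/2))"
        using \<tau>1 \<epsilon> by (intro add_left_mono) (simp add: algebra_simps)
      finally show ?thesis .
    next
      case False
      then have t0T: "t0 < T" using t0p by simp
      define Z where "Z = {x. abs_cont_on t0 T x \<and> x t0 = x0}"
      define cost where "cost x = g (x T) + ext_integral {t0..T} (\<lambda>t. L t (x t) (vector_derivative x (at t within {t0..T})))" for x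
      have V0eq: "V (t0, x0) = (INF x\<in>Z. cost x)" unfolding V_def value_fn_def Z_def cost_def using t0T t0p by auto
      have infv: "(INF x\<in>Z. cost x) = ereal V0" using V0eq V0 by simp
      have "(INF x\<in>Z. cost x) < ereal V0 + ereal (\<tau> * (\<epsilon>/2))" unfolding infv using \<tau>1 \<epsilon> by simp
      then obtain z where zZ: "z \<in> Z" and zc: "cost z < ereal V0 + ereal (\<tau> * (\<epsilon>/2))"
        by (subst (asm) INF_less_iff) blast
      have zac: "abs_cont_on t0 T z" and z0: "z t0 = x0" using zZ unfolding Z_def by auto
      define w where "w t = (if t \<le> t0 then y t else z t)" for t
      have wfun: "w = (\<lambda>t. if t \<le> t0 then y t else z t)" by (rule ext) (simp add: w_def)
      have acw: "abs_cont_on ts T w" unfolding wfun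
        by (rule abs_cont_concat[OF acy zac]) (use ts t0T y0 z0 in auto)
      have wts: "w ts = y ts" using ts by (simp add: w_def)
      have wT: "w T = z T" using t0T by (simp add: w_def)
      define hw where "hw t = L t (w t) (vector_derivative w (at t within {ts..T}))" for t
      define hz where "hz t = L t (z t) (vector_derivative z (at t within {t0..T}))" for t
      have step1: "V (ts, y ts) \<le> g (w T) + ext_integral {ts..T} hw"
        unfolding Vts hw_def by (rule INF_lower) (use acw wts in auto)
      have step2: "ext_integral {ts..T} hw \<le> ext_integral {ts..t0} hw + ext_integral {t0..T} hw"
        by (rule ext_integral_split) (use ts t0T in auto)
      have s1: "ext_integral {ts..t0} hw \<le> ereal (\<tau> * (L0 + e))"
      proof (rule short)
        fix t assume t: "t \<in> {ts<..<t0}"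
        have "(w has_vector_derivative f (t, y t)) (at t)"
          by (rule has_vector_derivative_transform_within_open[OF ydt[OF t], of "{..<t0}"]) (use t in \<open>auto simp: w_def\<close>)
        then have "vector_derivative w (at t within {ts..T}) = f (t, y t)"
          using vector_derivative_within_cbox[of ts T t w "f (t, y t)"] t ts t0T
          by (auto simp: cbox_interval intro: has_vector_derivative_at_within)
        moreover have "w t = y t" using t by (simp add: w_def)
        ultimately show "hw t = hy t" by (simp add: hw_def hy_def)
      qed
      have s2: "ext_integral {t0..T} hw = ext_integral {t0..T} hz"
      proof (rule ext_integral_cong_Ioo)
        fix t assume t: "t \<in> {t0<..<T}"
        have i1: "at t within {ts..T} = at t" using t ts by (intro at_within_interior) auto
        have i2: "at t within {t0..T} = at t" using t by (intro at_within_interior) auto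
        have eqp: "(w has_vector_derivative D) (at t) \<longleftrightarrow> (z has_vector_derivative D) (at t)" for D
        proof
          assume "(w has_vector_derivative D) (at t)"
          then show "(z has_vector_derivative D) (at t)"
            by (rule has_vector_derivative_transform_within_open[of _ _ _ "{t0<..}"]) (use t in \<open>auto simp: w_def\<close>)
        next
          assume "(z has_vector_derivative D) (at t)"
          then show "(w has_vector_derivative D) (at t)"
            by (rule has_vector_derivative_transform_within_open[of _ _ _ "{t0<..}"]) (use t in \<open>auto simp: w_def\<close>)
        qed
        have "vector_derivative w (at t) = vector_derivative z (at t)"
          unfolding vector_derivative_def using eqp by simp
        moreover have "w t = z t" using t by (simp add: w_def)
        ultimately show "hw t = hz t" unfolding hw_def hz_def i1 i2 by simp
      qed
      have costz: "cost z = g (z T) + ext_integral {t0..T} hz" unfolding cost_def hz_def ..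
      have "V (ts, y ts) \<le> g (z T) + (ext_integral {ts..t0} hw + ext_integral {t0..T} hw)"
        using step1 add_left_mono[OF step2, of "g (w T)"] wT by simp
      also have "\<dots> \<le> g (z T) + (ereal (\<tau> * (L0 + e)) + ext_integral {t0..T} hz)"
        unfolding s2 by (intro add_left_mono add_right_mono s1)
      also have "\<dots> = cost z + ereal (\<tau> * (L0 + e))" unfolding costz by (simp add: ac_simps)
      also have "\<dots> \<le> (ereal V0 + ereal (\<tau> * (\<epsilon>/2))) + ereal (\<tau> * (L0 + e))"
        using zc by (intro add_right_mono less_imp_le)
      also have "\<dots> = V (t0, x0) + ereal (\<tau> * (L0 + e + \<epsilon>/2))" unfolding V0 by (simp add: algebra_simps)
      finally show ?thesis .
    qed
    show ?thesis
    proof (intro exI[of _ \<tau>] exI[of _ u] conjI \<tau>1 du)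
      have "V (t0 - \<tau>, x0 - \<tau> *\<^sub>R u) = V (ts, y ts)" using yts by (simp add: ts_def)
      also have "\<dots> \<le> V (t0, x0) + ereal (\<tau> * (L0 + e + \<epsilon>/2))" by (rule Vbound)
      also have "\<dots> \<le> V (t0, x0) + ereal (\<tau> * (L0 + \<epsilon>))"
        using \<tau>1 e by (intro add_left_mono) (simp add: mult_left_mono)
      finally show "V (t0 - \<tau>, x0 - \<tau> *\<^sub>R u) \<le> V (t0, x0) + ereal (\<tau> * (L0 + \<epsilon>))" .
    qed
  qed
  have "subderiv V (t0, x0) (-1, -v0) \<le> ereal L0"
  proof (rule subderiv_le_from)
    show "\<bar>V (t0, x0)\<bar> \<noteq> \<infinity>" using V0 by simp
    fix \<epsilon> r \<delta> :: real assume "0 < \<epsilon>" "0 < r" "0 < \<delta>"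
    then obtain \<tau> u where tu: "0 < \<tau>" "\<tau> < \<delta>" "dist u v0 < r" "V (t0 - \<tau>, x0 - \<tau> *\<^sub>R u) \<le> V (t0, x0) + ereal (\<tau> * (L0 + \<epsilon>))"
      using key by blast
    have e1: "(t0, x0) + \<tau> *\<^sub>R (-1::real, -u) = (t0 - \<tau>, x0 - \<tau> *\<^sub>R u)" by simp
    have e2: "dist (-1::real, -u) (-1, -v0) = dist u v0" by (simp add: dist_Pair_Pair dist_minus)
    show "\<exists>\<tau> y. 0 < \<tau> \<and> \<tau> < \<delta> \<and> dist y (-1, -v0) < r \<and> V ((t0, x0) + \<tau> *\<^sub>R y) \<le> V (t0, x0) + ereal (\<tau> * (L0 + \<epsilon>))"
      by (intro exI[of _ \<tau>] exI[of _ "(-1, -u)"]) (use tu e1 e2 in auto)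
  qed
  then show ?thesis unfolding V_def L0 .
qed

end
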